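(* Let $K$ be an algebraically closed field of characteristic $0$ and let $X$ be a finite set of distinct points in $\mathbb{P}^1\times\mathbb{P}^1\times\mathbb{P}^1$ over $K$. Let $t_1=|\pi_1(X)|$ and $t_2=|\pi_2(X)|$. Then for all integers $k\ge0$, \[ H_X(t_1-1,t_2-1,k)=\sum_{m=1}^{k+1}\left(\sum_{n=m}^{\infty} r_n(X)\right). \]
   Context: Let $R=K[x_0,x_1,y_0,y_1,z_0,z_1]$ be $\mathbb{N}^3$-graded with $\deg x_i=(1,0,0)$, $\deg y_i=(0,1,0)$, $\deg z_i=(0,0,1)$. For a point $P=[a_0:a_1]\times[b_0:b_1]\times[c_0:c_1]$, $I(P)=(a_1x_0-a_0x_1,\,b_1y_0-b_0y_1,\,c_1z_0-c_0z_1)$, and for $X=\{P_1,\dots,P_s\}$, $I(X)=\bigcap_i I(P_i)$. The Hilbert function is $H_X(i,j,k)=\dim_K R_{i,j,k}-\dim_K I(X)_{i,j,k}$. $\pi_i$ is the projection to the $i$-th factor $\mathbb{P}^1$. A line of type $(1,1,0)$ is the subvariety defined by an ideal $(L,L')$ with $L\in R_{1,0,0}$, $L'\in R_{0,1,0}$ nonzero. For $i\ge1$, $r_i(X)$ is the number of lines of type $(1,1,0)$ containing exactly $i$ points of $X$ (zero for all but finitely many $i$). *)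

theory Defs
  imports "HOL-Library.Poly_Mapping" "HOL-Computational_Algebra.Polynomial"
begin

text \<open>Polynomials in the variables x0,x1,y0,y1,z0,z1, encoded as variables 0,...,5
  of the multivariate polynomial ring ((nat =>0 nat) =>0 'a) (monomial = exponent vector).\<close>

type_synonym 'a mpoly = "(nat \<Rightarrow>\<^sub>0 nat) \<Rightarrow>\<^sub>0 'a"

definition mvar :: "nat \<Rightarrow> 'a::comm_ring_1 mpoly" where
  "mvar v = Poly_Mapping.single (Poly_Mapping.single v 1) 1"

definition mconst :: "'a::comm_ring_1 \<Rightarrow> 'a mpoly" where
  "mconst c = Poly_Mapping.single 0 c"

definition mscale :: "'a::comm_ring_1 \<Rightarrow> 'a mpoly \<Rightarrow> 'a mpoly" where
  "mscale c p = Poly_Mapping.map (\<lambda>a. c * a) p"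

definition Rring :: "'a::comm_ring_1 mpoly set" where
  "Rring = {p :: 'a mpoly. \<forall>m\<in>Poly_Mapping.keys p. Poly_Mapping.keys m \<subseteq> {..<(6::nat)}}"

definition mdeg :: "(nat \<Rightarrow>\<^sub>0 nat) \<Rightarrow> nat \<times> nat \<times> nat" where
  "mdeg m = (Poly_Mapping.lookup m 0 + Poly_Mapping.lookup m 1, Poly_Mapping.lookup m 2 + Poly_Mapping.lookup m 3, Poly_Mapping.lookup m 4 + Poly_Mapping.lookup m 5)"

definition Rdeg :: "nat \<Rightarrow> nat \<Rightarrow> nat \<Rightarrow> 'a::comm_ring_1 mpoly set" where
  "Rdeg i j k = {p :: 'a mpoly. \<forall>m\<in>Poly_Mapping.keys p. Poly_Mapping.keys m \<subseteq> {..<(6::nat)} \<and> mdeg m = (i, j, k)}"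

definition pcls :: "'a::field \<times> 'a \<Rightarrow> ('a \<times> 'a) set" where
  "pcls v = {(l * fst v, l * snd v) | l. l \<noteq> 0}"

definition P1 :: "('a::field \<times> 'a) set set" where
  "P1 = {pcls v | v. v \<noteq> (0, 0)}"

type_synonym 'a pt3 = "('a \<times> 'a) set \<times> ('a \<times> 'a) set \<times> ('a \<times> 'a) set"

definition P1cube :: "'a::field pt3 set" where
  "P1cube = P1 \<times> P1 \<times> P1"

definition rep :: "('a \<times> 'a) set \<Rightarrow> 'a \<times> 'a" where
  "rep A = (SOME v. v \<in> A)"

definition ptform :: "nat \<Rightarrow> ('a::field \<times> 'a) set \<Rightarrow> 'a mpoly" where
  "ptform u A = mconst (snd (rep A)) * mvar u - mconst (fst (rep A)) * mvar (Suc u)"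

definition Ipt :: "'a::field pt3 \<Rightarrow> 'a mpoly set" where
  "Ipt P = {f * ptform 0 (fst P) + g * ptform 2 (fst (snd P)) + h * ptform 4 (snd (snd P))
            | f g h. f \<in> Rring \<and> g \<in> Rring \<and> h \<in> Rring}"

definition IX :: "'a::field pt3 set \<Rightarrow> 'a mpoly set" where
  "IX X = Rring \<inter> (\<Inter>P\<in>X. Ipt P)"

definition kdim :: "'a::field mpoly set \<Rightarrow> nat" where
  "kdim V = vector_space.dim mscale V"

definition HF :: "'a::field pt3 set \<Rightarrow> nat \<Rightarrow> nat \<Rightarrow> nat \<Rightarrow> nat" where
  "HF X i j k = kdim (Rdeg i j k :: 'a mpoly set) - kdim (IX X \<inter> Rdeg i j k)"

definition lvan :: "'a::field \<times> 'a \<Rightarrow> ('a \<times> 'a) set \<Rightarrow> bool" where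
  "lvan l A = (fst l * fst (rep A) + snd l * snd (rep A) = 0)"

definition line110 :: "'a::field \<times> 'a \<Rightarrow> 'a \<times> 'a \<Rightarrow> 'a pt3 set" where
  "line110 l m = {P \<in> P1cube. lvan l (fst P) \<and> lvan m (fst (snd P))}"

definition Lines110 :: "'a::field pt3 set set" where
  "Lines110 = {line110 l m | l m. l \<noteq> (0, 0) \<and> m \<noteq> (0, 0)}"

definition rnum :: "nat \<Rightarrow> 'a::field pt3 set \<Rightarrow> nat" where
  "rnum i X = card {L \<in> Lines110. card (X \<inter> L) = i}"

end

theory Submission
  imports Defs
begin



lemma mscale_eq: "mscale c p = mconst c * p"
  unfolding mscale_def mconst_def by (rule mult_map_scale_conv_mult)

lemma mconst_add: "mconst (a + b) = mconst a + mconst b"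
  unfolding mconst_def by (simp add: single_add)
lemma mconst_mult: "mconst (a * b) = mconst a * mconst b"
  unfolding mconst_def by (simp add: mult_single)
lemma mconst_one[simp]: "mconst 1 = 1"
  unfolding mconst_def by simp
lemma mconst_zero[simp]: "mconst 0 = 0"
  unfolding mconst_def by simp

interpretation MV: vector_space "mscale :: 'a::field \<Rightarrow> 'a mpoly \<Rightarrow> 'a mpoly"
  by unfold_locales (simp_all add: mscale_eq mconst_add mconst_mult algebra_simps)

lemma kdim_eq: "kdim V = MV.dim V"
  unfolding kdim_def by simp

definition monoval :: "(nat \<Rightarrow> 'a::comm_ring_1) \<Rightarrow> (nat \<Rightarrow>\<^sub>0 nat) \<Rightarrow> 'a" where
  "monoval v m = (\<Prod>i<6. v i ^ Poly_Mapping.lookup m i)"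

definition evl :: "(nat \<Rightarrow> 'a::comm_ring_1) \<Rightarrow> 'a mpoly \<Rightarrow> 'a" where
  "evl v p = (\<Sum>m\<in>Poly_Mapping.keys p. Poly_Mapping.lookup p m * monoval v m)"

lemma monoval_add: "monoval v (m + n) = monoval v m * monoval v n"
  unfolding monoval_def by (simp add: lookup_add power_add prod.distrib)

lemma evl_superset: "finite M \<Longrightarrow> Poly_Mapping.keys p \<subseteq> M \<Longrightarrow>
   evl v p = (\<Sum>m\<in>M. Poly_Mapping.lookup p m * monoval v m)"
  unfolding evl_def by (rule sum.mono_neutral_left) (auto simp: in_keys_iff)

lemma evl_add: "evl v (p + q) = evl v p + evl v q"
proof -
  let ?M = "Poly_Mapping.keys p \<union> Poly_Mapping.keys q"
  have "evl v (p + q) = (\<Sum>m\<in>?M. Poly_Mapping.lookup (p+q) m * monoval v m)"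
    by (rule evl_superset) (auto dest: subsetD[OF keys_add])
  also have "\<dots> = (\<Sum>m\<in>?M. Poly_Mapping.lookup p m * monoval v m) + (\<Sum>m\<in>?M. Poly_Mapping.lookup q m * monoval v m)"
    by (simp add: lookup_add distrib_right sum.distrib)
  also have "\<dots> = evl v p + evl v q"
    by (subst (1 2) evl_superset[of ?M]) auto
  finally show ?thesis .
qed

lemma evl_zero[simp]: "evl v 0 = 0"
  unfolding evl_def by simp

lemma evl_uminus: "evl v (- p) = - evl v p"
  unfolding evl_def by (simp add: sum_negf)

lemma evl_diff: "evl v (p - q) = evl v p - evl v q"
  using evl_add[of v p "-q"] by (simp add: evl_uminus)

lemma evl_sum: "evl v (sum f A) = (\<Sum>a\<in>A. evl v (f a))"
  by (induction A rule: infinite_finite_induct) (auto simp: evl_add)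

lemma evl_single: "evl v (Poly_Mapping.single m c) = c * monoval v m"
  unfolding evl_def by simp

lemma poly_sum_single: "p = (\<Sum>m\<in>Poly_Mapping.keys p. Poly_Mapping.single m (Poly_Mapping.lookup p m))"
  by (rule poly_mapping_eqI)
     (auto simp: lookup_sum lookup_single when_def in_keys_iff intro: sum.neutral
       simp add: sum.delta[of "Poly_Mapping.keys p", simplified])

lemma evl_mult: "evl v (p * q) = evl v p * evl v q"
proof -
  have "p * q = (\<Sum>m\<in>Poly_Mapping.keys p. \<Sum>n\<in>Poly_Mapping.keys q.
      Poly_Mapping.single m (Poly_Mapping.lookup p m) * Poly_Mapping.single n (Poly_Mapping.lookup q n))"
    by (subst (1) poly_sum_single[of p], subst (1) poly_sum_single[of q]) (simp add: sum_product)
  then have "evl v (p*q) = (\<Sum>m\<in>Poly_Mapping.keys p. \<Sum>n\<in>Poly_Mapping.keys q.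
       Poly_Mapping.lookup p m * monoval v m * (Poly_Mapping.lookup q n * monoval v n))"
    by (simp add: evl_sum mult_single evl_single monoval_add mult_ac)
  also have "\<dots> = evl v p * evl v q"
    unfolding evl_def by (simp add: sum_product)
  finally show ?thesis .
qed

lemma evl_mconst[simp]: "evl v (mconst c) = c"
  unfolding mconst_def evl_single monoval_def by simp

lemma evl_one[simp]: "evl v 1 = 1"
  using evl_mconst[of v 1] by simp

lemma evl_mvar[simp]: "u < 6 \<Longrightarrow> evl v (mvar u) = v u"
proof -
  assume u: "u < 6"
  have "(\<Prod>i<6. v i ^ (if u = i then Suc 0 else 0)) = (\<Prod>i<6. if u = i then v i else 1)"
    by (rule prod.cong) auto
  also have "\<dots> = v u" using u by (simp add: prod.delta')
  finally show ?thesis unfolding mvar_def evl_single monoval_def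
    by (simp add: lookup_single when_def)
qed

lemma evl_power: "evl v (p ^ n) = evl v p ^ n"
  by (induction n) (simp_all add: evl_mult)

lemma evl_prod: "evl v (prod f A) = (\<Prod>a\<in>A. evl v (f a))"
  by (induction A rule: infinite_finite_induct) (auto simp: evl_mult)




lemma mdeg_add: "mdeg (a + b) = (fst (mdeg a) + fst (mdeg b), fst (snd (mdeg a)) + fst (snd (mdeg b)),
   snd (snd (mdeg a)) + snd (snd (mdeg b)))"
  unfolding mdeg_def by (simp add: lookup_add)

lemma keys_add_nat: "Poly_Mapping.keys ((a::nat \<Rightarrow>\<^sub>0 nat) + b) = Poly_Mapping.keys a \<union> Poly_Mapping.keys b"
  by (auto simp: in_keys_iff lookup_add)

lemma Rdeg_add: "p \<in> Rdeg i j k \<Longrightarrow> q \<in> Rdeg i j k \<Longrightarrow> p + q \<in> Rdeg i j k"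
  unfolding Rdeg_def using keys_add[of p q] by blast

lemma Rdeg_zero[simp]: "0 \<in> Rdeg i j k"
  unfolding Rdeg_def by simp

lemma Rdeg_mult: assumes "p \<in> Rdeg i j k" "q \<in> Rdeg i' j' k'" shows "p * q \<in> Rdeg (i+i') (j+j') (k+k')"
  unfolding Rdeg_def
proof (intro CollectI ballI conjI)
  fix m assume m: "m \<in> Poly_Mapping.keys (p * q)"
  from m keys_mult[of p q] obtain a b where ab: "m = a + b" "a \<in> Poly_Mapping.keys p" "b \<in> Poly_Mapping.keys q"
    by blast
  show "Poly_Mapping.keys m \<subseteq> {..<6}" using assms ab unfolding Rdeg_def by (auto simp: keys_add_nat)
  show "mdeg m = (i + i', j + j', k + k')" using assms ab unfolding Rdeg_def by (auto simp: mdeg_add)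
qed

lemma keys_mconst_mult: "Poly_Mapping.keys (mconst c * p) \<subseteq> Poly_Mapping.keys p"
  using keys_mult[of "mconst c" p] unfolding mconst_def by (auto split: if_splits)

lemma Rdeg_scale: "p \<in> Rdeg i j k \<Longrightarrow> mconst c * p \<in> Rdeg i j k"
  unfolding Rdeg_def using keys_mconst_mult by blast

lemma Rdeg_uminus: "p \<in> Rdeg i j k \<Longrightarrow> - p \<in> Rdeg i j k"
  unfolding Rdeg_def by simp

lemma Rdeg_diff: "p \<in> Rdeg i j k \<Longrightarrow> q \<in> Rdeg i j k \<Longrightarrow> p - q \<in> Rdeg i j k"
  using Rdeg_add[OF _ Rdeg_uminus] by (metis diff_conv_add_uminus)

lemma Rdeg_sum: "(\<And>a. a \<in> A \<Longrightarrow> f a \<in> Rdeg i j k) \<Longrightarrow> sum f A \<in> Rdeg i j k"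
  by (induction A rule: infinite_finite_induct) (auto intro: Rdeg_add)

lemma Rdeg_mconst: "mconst c \<in> Rdeg 0 0 0"
  unfolding Rdeg_def mconst_def mdeg_def by simp

lemma Rdeg_one: "1 \<in> Rdeg 0 0 0"
  using Rdeg_mconst[of 1] by simp

lemma Rdeg_var0: "mvar 0 \<in> Rdeg 1 0 0" and Rdeg_var1: "mvar 1 \<in> Rdeg 1 0 0"
  and Rdeg_var2: "mvar 2 \<in> Rdeg 0 1 0" and Rdeg_var3: "mvar 3 \<in> Rdeg 0 1 0"
  and Rdeg_var4: "mvar 4 \<in> Rdeg 0 0 1" and Rdeg_var5: "mvar 5 \<in> Rdeg 0 0 1"
  unfolding Rdeg_def mvar_def mdeg_def by (simp_all add: lookup_single)

lemma Rdeg_power: "p \<in> Rdeg i j k \<Longrightarrow> p ^ n \<in> Rdeg (n*i) (n*j) (n*k)"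
  by (induction n) (auto simp: Rdeg_one dest: Rdeg_mult)

lemma Rdeg_Rring: "Rdeg i j k \<subseteq> Rring"
  unfolding Rdeg_def Rring_def by auto

lemma Rring_add: "p \<in> Rring \<Longrightarrow> q \<in> Rring \<Longrightarrow> p + q \<in> Rring"
  unfolding Rring_def using keys_add[of p q] by blast

lemma Rring_mult: "p \<in> Rring \<Longrightarrow> q \<in> Rring \<Longrightarrow> p * q \<in> Rring"
  unfolding Rring_def using keys_mult[of p q] by (fastforce simp: keys_add_nat)

lemma Rring_zero[simp]: "0 \<in> Rring"
  unfolding Rring_def by simp

lemma Rring_uminus: "p \<in> Rring \<Longrightarrow> - p \<in> Rring"
  unfolding Rring_def by simp

lemma Rring_mconst: "mconst c \<in> Rring"
  using Rdeg_Rring Rdeg_mconst by blast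

lemma Rring_mvar: "u < 6 \<Longrightarrow> mvar u \<in> Rring"
  unfolding Rring_def mvar_def by simp

lemma Rring_diff: "p \<in> Rring \<Longrightarrow> q \<in> Rring \<Longrightarrow> p - q \<in> Rring"
  by (metis diff_conv_add_uminus Rring_add Rring_uminus)

lemma Rring_ptform: "u < 5 \<Longrightarrow> ptform u A \<in> Rring"
  unfolding ptform_def by (intro Rring_diff Rring_mult Rring_mconst Rring_mvar) auto

lemma Ipt_add: "p \<in> Ipt P \<Longrightarrow> q \<in> Ipt P \<Longrightarrow> p + q \<in> Ipt P"
  unfolding Ipt_def
proof safe
  fix f g h f' g' h' :: "'a mpoly"
  assume "f \<in> Rring" "g \<in> Rring" "h \<in> Rring" "f' \<in> Rring" "g' \<in> Rring" "h' \<in> Rring"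
  then show "\<exists>f'' g'' h''. f * ptform 0 (fst P) + g * ptform 2 (fst (snd P)) + h * ptform 4 (snd (snd P)) +
          (f' * ptform 0 (fst P) + g' * ptform 2 (fst (snd P)) + h' * ptform 4 (snd (snd P))) =
         f'' * ptform 0 (fst P) + g'' * ptform 2 (fst (snd P)) + h'' * ptform 4 (snd (snd P)) \<and>
         f'' \<in> Rring \<and> g'' \<in> Rring \<and> h'' \<in> Rring"
    by (intro exI[of _ "f+f'"] exI[of _ "g+g'"] exI[of _ "h+h'"]) (auto simp: algebra_simps Rring_add)
qed

lemma Ipt_mult: "p \<in> Ipt P \<Longrightarrow> r \<in> Rring \<Longrightarrow> r * p \<in> Ipt P"
  unfolding Ipt_def
proof safe
  fix f g h :: "'a mpoly"
  assume "f \<in> Rring" "g \<in> Rring" "h \<in> Rring" "r \<in> Rring"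
  then show "\<exists>f'' g'' h''. r * (f * ptform 0 (fst P) + g * ptform 2 (fst (snd P)) + h * ptform 4 (snd (snd P))) =
         f'' * ptform 0 (fst P) + g'' * ptform 2 (fst (snd P)) + h'' * ptform 4 (snd (snd P)) \<and>
         f'' \<in> Rring \<and> g'' \<in> Rring \<and> h'' \<in> Rring"
    by (intro exI[of _ "r*f"] exI[of _ "r*g"] exI[of _ "r*h"]) (auto simp: algebra_simps Rring_mult)
qed

lemma Ipt_zero: "0 \<in> Ipt P"
  unfolding Ipt_def by (intro CollectI exI[of _ 0]) auto

lemma Ipt_gen0: "r \<in> Rring \<Longrightarrow> r * ptform 0 (fst P) \<in> Ipt P"
  unfolding Ipt_def by (intro CollectI exI[of _ r] exI[of _ 0]) auto
lemma Ipt_gen2: "r \<in> Rring \<Longrightarrow> r * ptform 2 (fst (snd P)) \<in> Ipt P"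
  unfolding Ipt_def by (intro CollectI exI[of _ 0] exI[of _ r]) auto
lemma Ipt_gen4: "r \<in> Rring \<Longrightarrow> r * ptform 4 (snd (snd P)) \<in> Ipt P"
  unfolding Ipt_def by (intro CollectI exI[of _ 0] exI[of _ 0] exI[of _ r]) auto

lemma IX_subspace: "MV.subspace (IX X \<inter> Rdeg i j k)"
  unfolding MV.subspace_def IX_def
  by (auto simp: mscale_eq Ipt_zero Ipt_add Ipt_mult Rring_mconst Rring_add Rdeg_add Rdeg_scale
      Rring_mult)

lemma Rdeg_subspace: "MV.subspace (Rdeg i j k)"
  unfolding MV.subspace_def by (auto simp: mscale_eq Rdeg_add Rdeg_scale)

lemma span_mult: "x \<in> MV.span B \<Longrightarrow> q * x \<in> MV.span ((\<lambda>b. q * b) ` B)"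
proof (induction rule: MV.span_induct_alt)
  case base then show ?case by (simp add: MV.span_zero)
next
  case (step c x y)
  have "q * mscale c x + q * y = mscale c (q * x) + q * y" by (simp add: mscale_eq algebra_simps)
  moreover have "mscale c (q * x) \<in> MV.span ((\<lambda>b. q * b) ` B)"
    using step by (intro MV.span_scale MV.span_base) auto
  ultimately show ?case using step by (simp add: distrib_left MV.span_add)
qed

lemma mvar_power: "mvar u ^ e = Poly_Mapping.single (Poly_Mapping.single u e) 1"
  unfolding mvar_def by (induction e) (simp_all add: mult_single single_add[symmetric] add.commute)

lemma monomial_decomp:
  assumes "Poly_Mapping.keys m \<subseteq> {..<6}"
  shows "Poly_Mapping.single m c = mconst c *
    ((mvar 0 ^ Poly_Mapping.lookup m 0 * mvar 1 ^ Poly_Mapping.lookup m 1) *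
     (mvar 2 ^ Poly_Mapping.lookup m 2 * mvar 3 ^ Poly_Mapping.lookup m 3) *
     (mvar 4 ^ Poly_Mapping.lookup m 4 * mvar 5 ^ Poly_Mapping.lookup m 5))"
proof -
  have m: "m = Poly_Mapping.single 0 (Poly_Mapping.lookup m 0) + Poly_Mapping.single 1 (Poly_Mapping.lookup m 1)
     + (Poly_Mapping.single 2 (Poly_Mapping.lookup m 2) + Poly_Mapping.single 3 (Poly_Mapping.lookup m 3))
     + (Poly_Mapping.single 4 (Poly_Mapping.lookup m 4) + Poly_Mapping.single 5 (Poly_Mapping.lookup m 5))"
  proof (rule poly_mapping_eqI)
    fix i
    show "Poly_Mapping.lookup m i = Poly_Mapping.lookup (Poly_Mapping.single 0 (Poly_Mapping.lookup m 0) + Poly_Mapping.single 1 (Poly_Mapping.lookup m 1)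
     + (Poly_Mapping.single 2 (Poly_Mapping.lookup m 2) + Poly_Mapping.single 3 (Poly_Mapping.lookup m 3))
     + (Poly_Mapping.single 4 (Poly_Mapping.lookup m 4) + Poly_Mapping.single 5 (Poly_Mapping.lookup m 5))) i"
    proof (cases "i < 6")
      case True
      then have "i = 0 \<or> i = 1 \<or> i = 2 \<or> i = 3 \<or> i = 4 \<or> i = 5" by auto
      then show ?thesis by (auto simp: lookup_add lookup_single)
    next
      case False
      then have "Poly_Mapping.lookup m i = 0" using assms by (auto simp: in_keys_iff)
      then show ?thesis using False by (auto simp: lookup_add lookup_single)
    qed
  qed
  show ?thesis
    apply (subst m)
    unfolding mvar_power mconst_def
    by (simp add: mult_single)
qed

lemma poly_decomp_Rdeg:
  assumes "p \<in> Rdeg i j k"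
  shows "p = (\<Sum>m\<in>Poly_Mapping.keys p. mconst (Poly_Mapping.lookup p m) *
    ((mvar 0 ^ Poly_Mapping.lookup m 0 * mvar 1 ^ Poly_Mapping.lookup m 1) *
     (mvar 2 ^ Poly_Mapping.lookup m 2 * mvar 3 ^ Poly_Mapping.lookup m 3) *
     (mvar 4 ^ Poly_Mapping.lookup m 4 * mvar 5 ^ Poly_Mapping.lookup m 5)))"
    and "\<And>m. m \<in> Poly_Mapping.keys p \<Longrightarrow> Poly_Mapping.lookup m 0 + Poly_Mapping.lookup m 1 = i
        \<and> Poly_Mapping.lookup m 2 + Poly_Mapping.lookup m 3 = j \<and> Poly_Mapping.lookup m 4 + Poly_Mapping.lookup m 5 = k"
proof -
  show "p = (\<Sum>m\<in>Poly_Mapping.keys p. mconst (Poly_Mapping.lookup p m) *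
    ((mvar 0 ^ Poly_Mapping.lookup m 0 * mvar 1 ^ Poly_Mapping.lookup m 1) *
     (mvar 2 ^ Poly_Mapping.lookup m 2 * mvar 3 ^ Poly_Mapping.lookup m 3) *
     (mvar 4 ^ Poly_Mapping.lookup m 4 * mvar 5 ^ Poly_Mapping.lookup m 5)))"
    apply (subst poly_sum_single)
    apply (rule sum.cong[OF refl])
    apply (rule monomial_decomp)
    using assms unfolding Rdeg_def by auto
  show "\<And>m. m \<in> Poly_Mapping.keys p \<Longrightarrow> Poly_Mapping.lookup m 0 + Poly_Mapping.lookup m 1 = i
        \<and> Poly_Mapping.lookup m 2 + Poly_Mapping.lookup m 3 = j \<and> Poly_Mapping.lookup m 4 + Poly_Mapping.lookup m 5 = k"
    using assms unfolding Rdeg_def mdeg_def by auto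
qed




inductive bf :: "nat \<Rightarrow> nat \<Rightarrow> 'a::field mpoly \<Rightarrow> bool" for u where
  bf0: "bf u d 0"
| bfmono: "p + q = d \<Longrightarrow> bf u d (mvar u ^ p * mvar (Suc u) ^ q)"
| bfadd: "bf u d f \<Longrightarrow> bf u d g \<Longrightarrow> bf u d (f + g)"
| bfscale: "bf u d f \<Longrightarrow> bf u d (mconst c * f)"

lemma mconst_neg1: "mconst (-1) * f = - f"
proof -
  have "mconst (-1) = (- 1 :: 'a mpoly)" unfolding mconst_def by (simp add: single_uminus)
  then show ?thesis by simp
qed

lemma bf_uminus: "bf u d f \<Longrightarrow> bf u d (- f)"
  using bfscale[of u d f "-1"] by (simp add: mconst_neg1)

lemma bf_diff: "bf u d f \<Longrightarrow> bf u d g \<Longrightarrow> bf u d (f - g)"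
  by (metis bf_uminus bfadd diff_conv_add_uminus)

lemma bf_sum: "(\<And>a. a \<in> A \<Longrightarrow> bf u d (f a)) \<Longrightarrow> bf u d (sum f A)"
  by (induction A rule: infinite_finite_induct) (auto intro: bfadd bf0)

lemma bf_mono_mult: "bf u (p + q + p' + q') (mvar u ^ p * mvar (Suc u) ^ q * (mvar u ^ p' * mvar (Suc u) ^ q'))"
proof -
  have "mvar u ^ p * mvar (Suc u) ^ q * (mvar u ^ p' * mvar (Suc u) ^ q') =
     (mvar u ^ (p + p') * mvar (Suc u) ^ (q + q') :: 'a mpoly)"
    by (simp add: power_add algebra_simps)
  moreover have "bf u (p + q + p' + q') (mvar u ^ (p + p') * mvar (Suc u) ^ (q + q') :: 'a mpoly)"
    by (rule bfmono) simp
  ultimately show ?thesis by simp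
qed

lemma bf_mult_mono: "bf u e g \<Longrightarrow> bf u (p + q + e) (mvar u ^ p * mvar (Suc u) ^ q * g)"
proof (induction rule: bf.induct)
  case (bf0 d) then show ?case by (simp add: bf.bf0)
next
  case (bfmono p' q' d) then show ?case using bf_mono_mult[of u p q p' q'] by (simp add: add.assoc)
next
  case (bfadd d f g) then show ?case by (simp add: distrib_left bf.bfadd)
next
  case (bfscale d f c)
  have eq: "mvar u ^ p * mvar (Suc u) ^ q * (mconst c * f) = mconst c * (mvar u ^ p * mvar (Suc u) ^ q * f)"
    by (simp only: mult.left_commute mult.assoc)
  show ?case unfolding eq by (rule bf.bfscale[OF bfscale.IH])
qed

lemma bf_mult: "bf u d f \<Longrightarrow> bf u e g \<Longrightarrow> bf u (d + e) (f * g)"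
proof (induction rule: bf.induct)
  case (bf0 d) then show ?case by (simp add: bf.bf0)
next
  case (bfmono p q d) then show ?case using bf_mult_mono by blast
next
  case (bfadd d f1 f2) then show ?case by (simp add: distrib_right bf.bfadd)
next
  case (bfscale d f c)
  have eq: "mconst c * f * g = mconst c * (f * g)" by (simp only: mult.assoc)
  show ?case unfolding eq by (rule bf.bfscale[OF bfscale.IH[OF bfscale.prems]])
qed

lemma bf_one: "bf u 0 1"
  using bfmono[of 0 0 0 u] by simp

lemma bf_mconst: "bf u 0 (mconst c)"
  using bfscale[OF bf_one, of u c] by simp

lemma bf_var0: "bf u 1 (mvar u)"
  using bfmono[of 1 0 1 u] by simp

lemma bf_var1: "bf u 1 (mvar (Suc u))"
  using bfmono[of 0 1 1 u] by simp

lemma bf_power: "bf u d f \<Longrightarrow> bf u (n * d) (f ^ n)"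
  by (induction n) (auto simp: bf_one dest: bf_mult)

lemma bf_ptform: "bf u 1 (ptform u A)"
  unfolding ptform_def using bf_var0 bf_var1 by (blast intro: bf_diff bfscale)

lemma bf_prod: "finite S \<Longrightarrow> (\<And>a. a \<in> S \<Longrightarrow> bf u 1 (f a)) \<Longrightarrow> bf u (card S) (prod f S)"
proof (induction S rule: finite_induct)
  case (insert x F)
  then show ?case using bf_mult[of u 1 "f x" "card F" "prod f F"] by simp
qed (simp add: bf_one)

lemma bf_prod_list: "(\<And>a. a \<in> set xs \<Longrightarrow> bf u 1 (f a)) \<Longrightarrow> bf u (length xs) (prod_list (map f xs))"
proof (induction xs)
  case (Cons x xs)
  then show ?case using bf_mult[of u 1 "f x" "length xs" "prod_list (map f xs)"] by simp
qed (simp add: bf_one)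

lemma bf_zero_const_aux: "bf u d g \<Longrightarrow> d = 0 \<Longrightarrow> \<exists>c. g = mconst c"
proof (induction rule: bf.induct)
  case (bf0 d) then show ?case by (intro exI[of _ 0]) simp
next
  case (bfmono p q d) then show ?case by (intro exI[of _ 1]) simp
next
  case (bfadd d f g) then show ?case by (auto simp: mconst_add[symmetric])
next
  case (bfscale d f c) then show ?case by (auto simp: mconst_mult[symmetric])
qed

lemma bf_zero_const: "bf u 0 g \<Longrightarrow> \<exists>c. g = mconst c"
  using bf_zero_const_aux by blast

lemma bf_Rdeg_gen:
  fixes g :: "'a::field mpoly"
  assumes "(mvar u :: 'a mpoly) \<in> Rdeg i j k" "(mvar w :: 'a mpoly) \<in> Rdeg i j k" "w = Suc u"
  shows "bf u d g \<Longrightarrow> g \<in> Rdeg (d*i) (d*j) (d*k)"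
proof (induction rule: bf.induct)
  case (bf0 d) then show ?case by simp
next
  case (bfmono p q d)
  have "(mvar u ^ p * mvar (Suc u) ^ q :: 'a mpoly) \<in> Rdeg (p*i + q*i) (p*j+q*j) (p*k+q*k)"
    using Rdeg_mult[OF Rdeg_power[OF assms(1), of p] Rdeg_power[OF assms(2), of q]] assms(3) by simp
  then show ?case using bfmono(1)[symmetric] by (simp add: add_mult_distrib)
next
  case (bfadd d f g) then show ?case by (simp add: Rdeg_add)
next
  case (bfscale d f c) then show ?case by (simp add: Rdeg_scale)
qed

lemma bf_Rdeg0: "bf 0 d g \<Longrightarrow> g \<in> Rdeg d 0 0"
  using bf_Rdeg_gen[OF Rdeg_var0 Rdeg_var1] by (simp add: numeral_eq_Suc)
lemma bf_Rdeg2: "bf 2 d g \<Longrightarrow> g \<in> Rdeg 0 d 0"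
  using bf_Rdeg_gen[OF Rdeg_var2 Rdeg_var3] by (simp add: numeral_eq_Suc)
lemma bf_Rdeg4: "bf 4 d g \<Longrightarrow> g \<in> Rdeg 0 0 d"
  using bf_Rdeg_gen[OF Rdeg_var4 Rdeg_var5] by (simp add: numeral_eq_Suc)

lemma bf_evl_cong:
  assumes "u < 5" "v u = v' u" "v (Suc u) = v' (Suc u)"
  shows "bf u d g \<Longrightarrow> evl v g = evl v' g"
proof (induction rule: bf.induct)
  case (bfmono p q d) then show ?case using assms by (simp add: evl_mult evl_power)
qed (auto simp: evl_add evl_mult)

lemma gen_red0:
  fixes w0 w1 A B C L h :: "'b::comm_ring_1"
  assumes "w1 = A * w0 - B * L"
  shows "w1 * (C * w0 ^ n + L * h) = (C * A) * w0 ^ Suc n + L * (- (C * B) * w0 ^ n + w1 * h)"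
proof -
  have "w1 * (C * w0 ^ n + L * h) - ((C * A) * w0 ^ Suc n + L * (- (C * B) * w0 ^ n + w1 * h))
     = (w1 - (A * w0 - B * L)) * C * w0 ^ n" by (simp add: algebra_simps)
  then show ?thesis using assms by simp
qed

lemma gen_red1:
  fixes w0 w1 A B C L h :: "'b::comm_ring_1"
  assumes "w0 = A * w1 + B * L"
  shows "w0 * (C * w1 ^ n + L * h) = (C * A) * w1 ^ Suc n + L * ((C * B) * w1 ^ n + w0 * h)"
proof -
  have "w0 * (C * w1 ^ n + L * h) - ((C * A) * w1 ^ Suc n + L * ((C * B) * w1 ^ n + w0 * h))
     = (w0 - (A * w1 + B * L)) * C * w1 ^ n" by (simp add: algebra_simps)
  then show ?thesis using assms by simp
qed

lemma mono_red0:
  fixes a0 a1 :: "'a::field"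
  assumes a0: "a0 \<noteq> 0" and L: "L = mconst a1 * mvar u - mconst a0 * mvar (Suc u)"
  shows "\<exists>c h. (p + q = 0 \<longrightarrow> h = 0) \<and> bf u (p + q - 1) h \<and>
     mvar u ^ p * mvar (Suc u) ^ q = mconst c * mvar u ^ (p + q) + L * h"
proof (induction q)
  case 0 then show ?case by (intro exI[of _ 1] exI[of _ 0]) (simp add: bf0)
next
  case (Suc q)
  then obtain c h where h: "p + q = 0 \<longrightarrow> h = 0" "bf u (p + q - 1) h"
    "mvar u ^ p * mvar (Suc u) ^ q = mconst c * mvar u ^ (p + q) + L * h" by blast
  have inv: "mconst (1 / a0) * mconst a0 = (1 :: 'a mpoly)"
    using a0 by (simp add: mconst_mult[symmetric])
  have inv2: "mconst (1 / a0) * mconst a1 = (mconst (a1 / a0) :: 'a mpoly)"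
    by (simp add: mconst_mult[symmetric])
  have "mconst (a1 / a0) * mvar u - mconst (1 / a0) * L =
     (mconst (a1 / a0) - mconst (1 / a0) * mconst a1) * mvar u + (mconst (1 / a0) * mconst a0) * mvar (Suc u)"
    unfolding L by (simp add: algebra_simps)
  also have "\<dots> = mvar (Suc u)" by (simp only: inv inv2) simp
  finally have w1: "mvar (Suc u) = mconst (a1 / a0) * mvar u - mconst (1 / a0) * L" by simp
  have "mvar u ^ p * mvar (Suc u) ^ Suc q = mvar (Suc u) * (mconst c * mvar u ^ (p + q) + L * h)"
    using h(3) by (simp add: algebra_simps)
  also have "\<dots> = (mconst c * mconst (a1 / a0)) * mvar u ^ Suc (p + q) +
      L * (- (mconst c * mconst (1 / a0)) * mvar u ^ (p + q) + mvar (Suc u) * h)"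
    by (rule gen_red0[OF w1])
  finally have eq: "mvar u ^ p * mvar (Suc u) ^ Suc q = mconst (c * (a1 / a0)) * mvar u ^ (p + Suc q) +
      L * (- (mconst c * mconst (1 / a0)) * mvar u ^ (p + q) + mvar (Suc u) * h)"
    by (simp only: mconst_mult add_Suc_right)
  have "bf u (p + q) (- (mconst c * mconst (1 / a0)) * mvar u ^ (p + q) + mvar (Suc u) * h)"
  proof (rule bfadd)
    have "bf u (p + q) (mconst c * (mconst (1 / a0) * (mvar u ^ (p + q) * mvar (Suc u) ^ 0)))"
      by (intro bfscale bfmono) simp
    then show "bf u (p + q) (- (mconst c * mconst (1 / a0)) * mvar u ^ (p + q))"
      using bf_uminus by (simp add: mult.assoc)
    show "bf u (p + q) (mvar (Suc u) * h)"
    proof (cases "p + q = 0")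
      case True then show ?thesis using h(1) by (simp add: bf0)
    next
      case False then show ?thesis using bf_mult[OF bf_var1 h(2)] by simp
    qed
  qed
  then show ?case using eq
    by (intro exI[of _ "c * (a1 / a0)"] exI[of _ "- (mconst c * mconst (1 / a0)) * mvar u ^ (p + q) + mvar (Suc u) * h"]) simp
qed

lemma mono_red1:
  fixes a0 a1 :: "'a::field"
  assumes a1: "a1 \<noteq> 0" and L: "L = mconst a1 * mvar u - mconst a0 * mvar (Suc u)"
  shows "\<exists>c h. (p + q = 0 \<longrightarrow> h = 0) \<and> bf u (p + q - 1) h \<and>
     mvar u ^ p * mvar (Suc u) ^ q = mconst c * mvar (Suc u) ^ (p + q) + L * h"
proof (induction p)
  case 0 then show ?case by (intro exI[of _ 1] exI[of _ 0]) (simp add: bf0)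
next
  case (Suc p)
  then obtain c h where h: "p + q = 0 \<longrightarrow> h = 0" "bf u (p + q - 1) h"
    "mvar u ^ p * mvar (Suc u) ^ q = mconst c * mvar (Suc u) ^ (p + q) + L * h" by blast
  have inv: "mconst (1 / a1) * mconst a1 = (1 :: 'a mpoly)"
    using a1 by (simp add: mconst_mult[symmetric])
  have inv2: "mconst (1 / a1) * mconst a0 = (mconst (a0 / a1) :: 'a mpoly)"
    by (simp add: mconst_mult[symmetric])
  have "mconst (a0 / a1) * mvar (Suc u) + mconst (1 / a1) * L =
     (mconst (a0 / a1) - mconst (1 / a1) * mconst a0) * mvar (Suc u) + (mconst (1 / a1) * mconst a1) * mvar u"
    unfolding L by (simp add: algebra_simps)
  also have "\<dots> = mvar u" by (simp only: inv inv2) simp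
  finally have w0: "mvar u = mconst (a0 / a1) * mvar (Suc u) + mconst (1 / a1) * L" by simp
  have "mvar u ^ Suc p * mvar (Suc u) ^ q = mvar u * (mconst c * mvar (Suc u) ^ (p + q) + L * h)"
    using h(3) by (simp add: algebra_simps)
  also have "\<dots> = (mconst c * mconst (a0 / a1)) * mvar (Suc u) ^ Suc (p + q) +
      L * ((mconst c * mconst (1 / a1)) * mvar (Suc u) ^ (p + q) + mvar u * h)"
    by (rule gen_red1[OF w0])
  finally have eq: "mvar u ^ Suc p * mvar (Suc u) ^ q = mconst (c * (a0 / a1)) * mvar (Suc u) ^ (Suc p + q) +
      L * ((mconst c * mconst (1 / a1)) * mvar (Suc u) ^ (p + q) + mvar u * h)"
    by (simp only: mconst_mult add_Suc)
  have "bf u (p + q) ((mconst c * mconst (1 / a1)) * mvar (Suc u) ^ (p + q) + mvar u * h)"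
  proof (rule bfadd)
    have "bf u (p + q) (mconst c * (mconst (1 / a1) * (mvar u ^ 0 * mvar (Suc u) ^ (p + q))))"
      by (intro bfscale bfmono) simp
    then show "bf u (p + q) ((mconst c * mconst (1 / a1)) * mvar (Suc u) ^ (p + q))"
      by (simp add: mult.assoc)
    show "bf u (p + q) (mvar u * h)"
    proof (cases "p + q = 0")
      case True then show ?thesis using h(1) by (simp add: bf0)
    next
      case False then show ?thesis using bf_mult[OF bf_var0 h(2)] by simp
    qed
  qed
  then show ?case using eq
    by (intro exI[of _ "c * (a0 / a1)"] exI[of _ "(mconst c * mconst (1 / a1)) * mvar (Suc u) ^ (p + q) + mvar u * h"]) simp
qed

lemma bf_red:
  fixes a0 a1 :: "'a::field"
  assumes a: "(a0, a1) \<noteq> (0, 0)" and L: "L = mconst a1 * mvar u - mconst a0 * mvar (Suc u)"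
  shows "bf u d g \<Longrightarrow> \<exists>c h. bf u (d - 1) h \<and> g = mconst c * (if a0 \<noteq> 0 then mvar u else mvar (Suc u)) ^ d + L * h"
proof (induction rule: bf.induct)
  case (bf0 d) then show ?case by (intro exI[of _ 0] exI[of _ 0]) (simp add: bf.bf0)
next
  case (bfmono p q d)
  show ?case
  proof (cases "a0 \<noteq> 0")
    case True then show ?thesis using mono_red0[OF True L, of p q] bfmono by auto
  next
    case False
    then have "a1 \<noteq> 0" using a by auto
    then show ?thesis using mono_red1[OF _ L, of p q] bfmono False by auto
  qed
next
  case (bfadd d f g)
  then obtain c h c' h' where "bf u (d - 1) h" "f = mconst c * (if a0 \<noteq> 0 then mvar u else mvar (Suc u)) ^ d + L * h"
    "bf u (d - 1) h'" "g = mconst c' * (if a0 \<noteq> 0 then mvar u else mvar (Suc u)) ^ d + L * h'" by blast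
  then show ?case by (intro exI[of _ "c + c'"] exI[of _ "h + h'"]) (simp add: bf.bfadd mconst_add algebra_simps)
next
  case (bfscale d f c)
  then obtain c' h where "bf u (d - 1) h" "f = mconst c' * (if a0 \<noteq> 0 then mvar u else mvar (Suc u)) ^ d + L * h"
    by blast
  moreover have "bf u (d - 1) (mconst c * h)" using calculation(1) by (rule bf.bfscale)
  ultimately show ?case by (intro exI[of _ "c * c'"] exI[of _ "mconst c * h"]) (simp add: mconst_mult algebra_simps)
qed

lemma bf_div:
  fixes a0 a1 :: "'a::field"
  assumes a: "(a0, a1) \<noteq> (0, 0)" and L: "L = mconst a1 * mvar u - mconst a0 * mvar (Suc u)"
    and u: "u < 5" and v: "v u = a0" "v (Suc u) = a1"
    and g: "bf u d g" and z: "evl v g = 0"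
  shows "\<exists>h. bf u (d - 1) h \<and> g = L * h"
proof -
  obtain c h where h: "bf u (d - 1) h" "g = mconst c * (if a0 \<noteq> 0 then mvar u else mvar (Suc u)) ^ d + L * h"
    using bf_red[OF a L g] by blast
  have "evl v L = 0" using u v unfolding L by (simp add: evl_diff evl_mult)
  then have "evl v g = c * (if a0 \<noteq> 0 then a0 else a1) ^ d"
    using h(2) u v by (simp add: evl_add evl_mult evl_power)
  with z a have "c = 0" by (auto split: if_splits)
  with h show ?thesis by auto
qed




lemma pcls_mem_eq:
  assumes "w \<in> pcls v" shows "pcls w = pcls v"
proof -
  obtain l where l: "l \<noteq> 0" "w = (l * fst v, l * snd v)" using assms unfolding pcls_def by auto
  show ?thesis
  proof
    show "pcls w \<subseteq> pcls v"
    proof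
      fix x assume "x \<in> pcls w"
      then obtain m where m: "m \<noteq> 0" "x = (m * fst w, m * snd w)" unfolding pcls_def by auto
      then have "x = ((m * l) * fst v, (m * l) * snd v)" using l by simp
      then show "x \<in> pcls v" unfolding pcls_def using m l by auto
    qed
    show "pcls v \<subseteq> pcls w"
    proof
      fix x assume "x \<in> pcls v"
      then obtain m where m: "m \<noteq> 0" "x = (m * fst v, m * snd v)" unfolding pcls_def by auto
      then have "x = ((m / l) * fst w, (m / l) * snd w)" using l by (simp add: field_simps)
      moreover have "m / l \<noteq> 0" using m l by simp
      ultimately show "x \<in> pcls w" unfolding pcls_def by blast
    qed
  qed
qed

lemma P1_rep:
  assumes "A \<in> P1"
  shows "rep A \<in> A" "rep A \<noteq> (0, 0)" "A = pcls (rep A)"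
proof -
  obtain v where v: "v \<noteq> (0, 0)" "A = pcls v" using assms unfolding P1_def by auto
  have "(fst v, snd v) \<in> A" unfolding v pcls_def by (auto intro!: exI[of _ 1])
  then show r: "rep A \<in> A" unfolding rep_def by (rule someI)
  then obtain l where "l \<noteq> 0" "rep A = (l * fst v, l * snd v)" unfolding v pcls_def by auto
  then show "rep A \<noteq> (0, 0)" using v by (cases v) auto
  show "A = pcls (rep A)" using pcls_mem_eq[of "rep A" v] r v by simp
qed

lemma P1_cross:
  assumes A: "A \<in> P1" and B: "B \<in> P1"
    and z: "snd (rep B) * fst (rep A) - fst (rep B) * snd (rep A) = 0"
  shows "A = B"
proof -
  obtain a0 a1 where a: "rep A = (a0, a1)" by fastforce
  obtain b0 b1 where b: "rep B = (b0, b1)" by fastforce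
  have an: "(a0, a1) \<noteq> (0, 0)" and bn: "(b0, b1) \<noteq> (0, 0)" using P1_rep A B a b by metis+
  have z': "b1 * a0 = b0 * a1" using z a b by simp
  have "(b0, b1) \<in> pcls (a0, a1)"
  proof (cases "a0 = 0")
    case False
    then have "b0 \<noteq> 0" using z' bn by auto
    then show ?thesis unfolding pcls_def using False z'
      by (intro CollectI exI[of _ "b0 / a0"]) (auto simp: field_simps)
  next
    case True
    then have a1: "a1 \<noteq> 0" using an by auto
    then have "b0 = 0" using z' True by auto
    then have "b1 \<noteq> 0" using bn by auto
    then show ?thesis unfolding pcls_def using True a1 \<open>b0 = 0\<close>
      by (intro CollectI exI[of _ "b1 / a1"]) (auto simp: field_simps)
  qed
  then have "pcls (b0, b1) = pcls (a0, a1)" by (rule pcls_mem_eq)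
  then show ?thesis using P1_rep(3)[OF A] P1_rep(3)[OF B] a b by simp
qed

definition pvec :: "nat \<Rightarrow> ('a \<times> 'a) set \<Rightarrow> nat \<Rightarrow> 'a" where
  "pvec u A = (\<lambda>i. if i = u then fst (rep A) else snd (rep A))"

lemma evl_pvec_ptform:
  "u < 5 \<Longrightarrow> evl (pvec u A) (ptform u B :: 'a::field mpoly) = snd (rep B) * fst (rep A) - fst (rep B) * snd (rep A)"
  unfolding ptform_def pvec_def by (simp add: evl_diff evl_mult)

lemma evl_pvec_ptform_ne:
  "u < 5 \<Longrightarrow> A \<in> P1 \<Longrightarrow> B \<in> P1 \<Longrightarrow> A \<noteq> B \<Longrightarrow> evl (pvec u A) (ptform u B :: 'a::field mpoly) \<noteq> 0"
  using P1_cross evl_pvec_ptform by metis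

lemma evl_pvec_ptform_eq:
  "u < 5 \<Longrightarrow> evl (pvec u A) (ptform u A :: 'a::field mpoly) = 0"
  by (simp add: evl_pvec_ptform mult.commute)

lemma mscale_one: "mscale c 1 = mconst c"
  by (simp add: mscale_eq)

definition eL :: "nat \<Rightarrow> ('a::field \<times> 'a) set set \<Rightarrow> ('a \<times> 'a) set \<Rightarrow> 'a mpoly" where
  "eL u S A = prod (ptform u) (S - {A})"

lemma bf_div_pt:
  assumes u: "u < 5" and A: "A \<in> P1" and g: "bf u d g" and z: "evl (pvec u A) g = 0"
  shows "\<exists>h. bf u (d - 1) h \<and> g = ptform u A * h"
proof -
  obtain a0 a1 where a: "rep A = (a0, a1)" by fastforce
  have an: "(a0, a1) \<noteq> (0, 0)" using P1_rep(2)[OF A] a by simp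
  show ?thesis
    by (rule bf_div[OF an _ u _ _ g z]) (simp_all add: ptform_def a pvec_def)
qed

lemma lagrange:
  assumes u: "u < 5"
  shows "finite S \<Longrightarrow> S \<subseteq> P1 \<Longrightarrow> card S = Suc d \<Longrightarrow> bf u d g \<Longrightarrow> g \<in> MV.span (eL u S ` S)"
proof (induction S arbitrary: d g rule: finite_induct)
  case empty then show ?case by simp
next
  case (insert A0 S')
  show ?case
  proof (cases "S' = {}")
    case True
    then have "d = 0" using insert by simp
    then obtain c where c: "g = mconst c" using bf_zero_const insert by blast
    have "eL u (insert A0 S') A0 = 1" unfolding eL_def using True by simp
    then have "1 \<in> eL u (insert A0 S') ` insert A0 S'" by force
    then have "mscale c 1 \<in> MV.span (eL u (insert A0 S') ` insert A0 S')"
      by (intro MV.span_scale MV.span_base)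
    then show ?thesis using c by (simp only: mscale_one)
  next
    case False
    have dS: "d = card S'" using insert by simp
    have A0: "A0 \<in> P1" and S'P: "S' \<subseteq> P1" using insert by auto
    define e0 where "e0 = eL u (insert A0 S') A0"
    have e0': "e0 = prod (ptform u) S'" unfolding e0_def eL_def using insert by (simp add: insert_Diff_if)
    have bfe0: "bf u d e0" unfolding e0' dS using insert by (intro bf_prod bf_ptform)
    have val0: "evl (pvec u A0) e0 \<noteq> 0"
      unfolding e0' evl_prod using insert u
      by (subst prod_zero_iff) (auto dest: evl_pvec_ptform_ne[of u A0, rotated 2] intro: evl_pvec_ptform_ne)
    define g' where "g' = g - mconst (evl (pvec u A0) g / evl (pvec u A0) e0) * e0"
    have bfg': "bf u d g'" unfolding g'_def using insert bfe0 by (intro bf_diff bfscale)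
    have "evl (pvec u A0) g' = 0" unfolding g'_def using val0 by (simp add: evl_diff evl_mult)
    then obtain h where h: "bf u (d - 1) h" "g' = ptform u A0 * h"
      using bf_div_pt[OF u A0 bfg'] by blast
    have cS': "card S' = Suc (d - 1)" using dS False insert by (simp add: card_gt_0_iff)
    have "h \<in> MV.span (eL u S' ` S')" using insert.IH[OF S'P cS' h(1)] .
    then have "ptform u A0 * h \<in> MV.span ((\<lambda>b. ptform u A0 * b) ` eL u S' ` S')" by (rule span_mult)
    moreover have "(\<lambda>b. ptform u A0 * b) ` eL u S' ` S' \<subseteq> eL u (insert A0 S') ` insert A0 S'"
    proof
      fix x assume "x \<in> (\<lambda>b. ptform u A0 * b) ` eL u S' ` S'"
      then obtain A where A: "A \<in> S'" "x = ptform u A0 * eL u S' A" by auto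
      have "insert A0 S' - {A} = insert A0 (S' - {A})" using A insert by auto
      then have "eL u (insert A0 S') A = ptform u A0 * eL u S' A"
        unfolding eL_def using insert by simp
      then show "x \<in> eL u (insert A0 S') ` insert A0 S'" using A by force
    qed
    ultimately have 1: "g' \<in> MV.span (eL u (insert A0 S') ` insert A0 S')"
      using h(2) MV.span_mono by blast
    have "e0 \<in> eL u (insert A0 S') ` insert A0 S'" unfolding e0_def by simp
    then have 2: "mscale (evl (pvec u A0) g / evl (pvec u A0) e0) e0 \<in> MV.span (eL u (insert A0 S') ` insert A0 S')"
      by (intro MV.span_scale MV.span_base)
    have "g = g' + mscale (evl (pvec u A0) g / evl (pvec u A0) e0) e0"
      unfolding g'_def by (simp only: mscale_eq) simp
    then show ?thesis using MV.span_add[OF 1 2] by simp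
  qed
qed

definition uf :: "nat \<Rightarrow> ('a::field \<times> 'a) set \<Rightarrow> 'a mpoly" where
  "uf u C = (if fst (rep C) \<noteq> 0 then mvar u else mvar (Suc u))"

definition NB :: "nat \<Rightarrow> ('a::field \<times> 'a) set list \<Rightarrow> nat \<Rightarrow> nat \<Rightarrow> 'a mpoly" where
  "NB u cs d r = prod_list (map (ptform u) (take r cs)) * uf u (cs ! r) ^ (d - r)"

lemma bf_uf: "bf u 1 (uf u C)"
  unfolding uf_def using bf_var0 bf_var1 by auto

lemma evl_uf: "u < 5 \<Longrightarrow> C \<in> P1 \<Longrightarrow> evl (pvec u C) (uf u C :: 'a::field mpoly) \<noteq> 0"
  using P1_rep(2)[of C] unfolding uf_def pvec_def by (cases "rep C") auto

lemma newton:
  assumes u: "u < 5"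
  shows "set cs \<subseteq> P1 \<Longrightarrow> bf u d g \<Longrightarrow> \<exists>y h. y \<in> MV.span (NB u cs d ` {..< min (length cs) (Suc d)}) \<and>
     bf u (d - length cs) h \<and> (d < length cs \<longrightarrow> h = 0) \<and> g = y + prod_list (map (ptform u) cs) * h"
proof (induction cs arbitrary: d g)
  case Nil then show ?case by (intro exI[of _ 0] exI[of _ g]) (simp add: MV.span_zero)
next
  case (Cons C cs)
  have C: "C \<in> P1" and csP: "set cs \<subseteq> P1" using Cons by auto
  show ?case
  proof (cases d)
    case 0
    then obtain c where c: "g = mconst c" using bf_zero_const Cons by blast
    have "NB u (C # cs) d 0 = 1" unfolding NB_def 0 by simp
    then have "1 \<in> NB u (C # cs) d ` {..< min (length (C # cs)) (Suc d)}" by force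
    then have "mscale c 1 \<in> MV.span (NB u (C # cs) d ` {..< min (length (C # cs)) (Suc d)})"
      by (intro MV.span_scale MV.span_base)
    then have "g \<in> MV.span (NB u (C # cs) d ` {..< min (length (C # cs)) (Suc d)})" using c by (simp only: mscale_one)
    then show ?thesis using 0 by (intro exI[of _ g] exI[of _ 0]) (simp add: bf0)
  next
    case (Suc d')
    define e where "e = uf u C"
    have bfe: "bf u d (e ^ d)" using bf_power[OF bf_uf, of u d] unfolding e_def by simp
    have ve: "evl (pvec u C) (e ^ d) \<noteq> 0" unfolding e_def evl_power using evl_uf[OF u C] by simp
    define g' where "g' = g - mconst (evl (pvec u C) g / evl (pvec u C) (e ^ d)) * e ^ d"
    have bfg': "bf u d g'" unfolding g'_def using Cons bfe by (intro bf_diff bfscale)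
    have "evl (pvec u C) g' = 0" unfolding g'_def using ve by (simp add: evl_diff evl_mult)
    then obtain h1 where h1: "bf u d' h1" "g' = ptform u C * h1"
      using bf_div_pt[OF u C bfg'] Suc by auto
    obtain y1 h2 where y1: "y1 \<in> MV.span (NB u cs d' ` {..< min (length cs) (Suc d')})"
      "bf u (d' - length cs) h2" "d' < length cs \<longrightarrow> h2 = 0" "h1 = y1 + prod_list (map (ptform u) cs) * h2"
      using Cons.IH[OF csP h1(1)] by blast
    let ?T = "NB u (C # cs) d ` {..< min (length (C # cs)) (Suc d)}"
    have "ptform u C * y1 \<in> MV.span ((\<lambda>b. ptform u C * b) ` NB u cs d' ` {..< min (length cs) (Suc d')})"
      using y1(1) by (rule span_mult)
    moreover have "(\<lambda>b. ptform u C * b) ` NB u cs d' ` {..< min (length cs) (Suc d')} \<subseteq> ?T"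
    proof
      fix x assume "x \<in> (\<lambda>b. ptform u C * b) ` NB u cs d' ` {..< min (length cs) (Suc d')}"
      then obtain r where r: "r < min (length cs) (Suc d')" "x = ptform u C * NB u cs d' r" by auto
      have "x = NB u (C # cs) d (Suc r)" unfolding r(2) NB_def Suc by (simp add: mult.assoc)
      moreover have "Suc r < min (length (C # cs)) (Suc d)" using r Suc by simp
      ultimately show "x \<in> ?T" by blast
    qed
    ultimately have 1: "ptform u C * y1 \<in> MV.span ?T" using MV.span_mono by blast
    have "NB u (C # cs) d 0 = e ^ d" unfolding NB_def e_def by simp
    then have "e ^ d \<in> ?T" using Suc by force
    then have 2: "mscale (evl (pvec u C) g / evl (pvec u C) (e ^ d)) (e ^ d) \<in> MV.span ?T"
      by (intro MV.span_scale MV.span_base)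
    have geq: "g = (mscale (evl (pvec u C) g / evl (pvec u C) (e ^ d)) (e ^ d) + ptform u C * y1)
        + prod_list (map (ptform u) (C # cs)) * h2"
      using h1(2) y1(4) unfolding g'_def by (simp only: mscale_eq) (simp add: algebra_simps)
    show ?thesis
      apply (rule exI[of _ "mscale (evl (pvec u C) g / evl (pvec u C) (e ^ d)) (e ^ d) + ptform u C * y1"])
      apply (rule exI[of _ h2])
      using MV.span_add[OF 2 1] y1(2,3) geq Suc by simp
  qed
qed




lemma dim_count:
  fixes V W :: "'a::field mpoly set" and \<beta> :: "'j \<Rightarrow> 'a mpoly"
  assumes J: "finite J" and Wsub: "MV.subspace W" and WV: "W \<subseteq> V" and BV: "\<beta> ` J \<subseteq> V"
    and span: "V \<subseteq> MV.span (\<beta> ` J \<union> W)" and F: "finite F" "V \<subseteq> MV.span F"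
    and indep: "\<And>c. (\<Sum>x\<in>J. mscale (c x) (\<beta> x)) \<in> W \<Longrightarrow> \<forall>x\<in>J. c x = 0"
  shows "MV.dim V = card J + MV.dim W"
proof -
  have inj: "inj_on \<beta> J"
  proof (rule inj_onI, rule ccontr)
    fix x y assume xy: "x \<in> J" "y \<in> J" "\<beta> x = \<beta> y" "x \<noteq> y"
    define c where "c z = (if z = x then 1 else if z = y then -1 else (0::'a))" for z
    have "\<And>z. mscale (c z) (\<beta> z) = (if z = x then \<beta> x else 0) + (if z = y then - \<beta> y else 0)"
      using xy(4) unfolding c_def by (auto simp: MV.scale_minus_left)
    then have "(\<Sum>z\<in>J. mscale (c z) (\<beta> z)) = \<beta> x - \<beta> y"
      using J xy by (simp add: sum.distrib sum_negf if_distrib[of uminus] cong: if_cong)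
    then have "(\<Sum>z\<in>J. mscale (c z) (\<beta> z)) \<in> W" using xy(3) MV.subspace_0[OF Wsub] by simp
    then have "c x = 0" using indep xy by blast
    then show False unfolding c_def by simp
  qed
  have disj: "\<beta> ` J \<inter> W = {}"
  proof (rule ccontr)
    assume "\<beta> ` J \<inter> W \<noteq> {}"
    then obtain x where x: "x \<in> J" "\<beta> x \<in> W" by auto
    define c where "c z = (if z = x then 1 else (0::'a))" for z
    have "\<And>z. mscale (c z) (\<beta> z) = (if z = x then \<beta> x else 0)"
      unfolding c_def by auto
    then have "(\<Sum>z\<in>J. mscale (c z) (\<beta> z)) = \<beta> x" using J x by simp
    then have "c x = 0" using indep x by auto
    then show False unfolding c_def by simp
  qed
  obtain C where C: "C \<subseteq> W" "MV.independent C" "W \<subseteq> MV.span C" "card C = MV.dim W"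
    using MV.basis_exists by blast
  have finC: "finite C" using MV.independent_span_bound[OF F(1) C(2)] C(1) WV F(2) by blast
  have spanCW: "MV.span C \<subseteq> W" using C(1) Wsub by (rule MV.span_minimal)
  define D where "D = \<beta> ` J \<union> C"
  have finD: "finite D" unfolding D_def using J finC by simp
  have DV: "D \<subseteq> V" unfolding D_def using BV C(1) WV by auto
  have VD: "V \<subseteq> MV.span D"
  proof -
    have "\<beta> ` J \<union> W \<subseteq> MV.span D" unfolding D_def
      using C(3) MV.span_superset[of "\<beta> ` J \<union> C"] MV.span_mono[of C "\<beta> ` J \<union> C"] by blast
    then have "MV.span (\<beta> ` J \<union> W) \<subseteq> MV.span D" by (rule MV.span_minimal) simp
    then show ?thesis using span by blast
  qed
  have indD: "MV.independent D"
  proof (rule MV.independent_if_scalars_zero[OF finD])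
    fix f x assume sum0: "(\<Sum>x\<in>D. mscale (f x) x) = 0" and xD: "x \<in> D"
    have dj: "\<beta> ` J \<inter> C = {}" using disj C(1) by blast
    have "(\<Sum>x\<in>D. mscale (f x) x) = (\<Sum>x\<in>\<beta> ` J. mscale (f x) x) + (\<Sum>x\<in>C. mscale (f x) x)"
      unfolding D_def using J finC dj by (rule sum.union_disjoint[OF finite_imageI])
    then have eq: "(\<Sum>x\<in>\<beta> ` J. mscale (f x) x) = - (\<Sum>x\<in>C. mscale (f x) x)" using sum0
      by (simp add: eq_neg_iff_add_eq_0)
    have "(\<Sum>x\<in>C. mscale (f x) x) \<in> MV.span C"
      by (intro MV.span_sum MV.span_scale MV.span_base)
    then have "- (\<Sum>x\<in>C. mscale (f x) x) \<in> W" using spanCW MV.subspace_neg[OF Wsub] by blast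
    moreover have "(\<Sum>x\<in>\<beta> ` J. mscale (f x) x) = (\<Sum>z\<in>J. mscale (f (\<beta> z)) (\<beta> z))"
      using sum.reindex[OF inj] by simp
    ultimately have "(\<Sum>z\<in>J. mscale (f (\<beta> z)) (\<beta> z)) \<in> W" using eq by simp
    then have fJ: "\<forall>z\<in>J. f (\<beta> z) = 0" by (rule indep)
    then have "(\<Sum>x\<in>\<beta> ` J. mscale (f x) x) = 0" by (auto intro: sum.neutral)
    then have "(\<Sum>x\<in>C. mscale (f x) x) = 0" using eq by simp
    then have fC: "\<forall>v\<in>C. f v = 0" using C(2) finC
      unfolding MV.independent_explicit_finite_subsets by blast
    show "f x = 0" using xD fJ fC unfolding D_def by auto
  qed
  have "card D = MV.dim V" using MV.basis_card_eq_dim[OF DV VD indD] .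
  moreover have "card D = card J + card C"
    unfolding D_def using J finC disj C(1) card_Un_disjoint[of "\<beta> ` J" C] card_image[OF inj] by auto
  ultimately show ?thesis using C(4) by simp
qed

lemma triangular:
  fixes c :: "nat \<Rightarrow> 'a::field"
  assumes sums: "\<And>\<rho>. \<rho> < N \<Longrightarrow> (\<Sum>r<N. c r * nb r \<rho>) = 0"
    and upper: "\<And>r \<rho>. \<rho> < r \<Longrightarrow> r < N \<Longrightarrow> nb r \<rho> = 0"
    and diag: "\<And>\<rho>. \<rho> < N \<Longrightarrow> nb \<rho> \<rho> \<noteq> 0"
  shows "\<rho> < N \<Longrightarrow> c \<rho> = 0"
proof (induction \<rho> rule: less_induct)
  case (less \<rho>)
  have "\<And>r. r \<in> {..<N} - {\<rho>} \<Longrightarrow> c r * nb r \<rho> = 0"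
  proof -
    fix r assume r: "r \<in> {..<N} - {\<rho>}"
    show "c r * nb r \<rho> = 0"
    proof (cases "r < \<rho>")
      case True then show ?thesis using less by simp
    next
      case False then show ?thesis using r upper by simp
    qed
  qed
  then have z: "(\<Sum>r\<in>{..<N} - {\<rho>}. c r * nb r \<rho>) = 0" by (intro sum.neutral) blast
  have "(\<Sum>r<N. c r * nb r \<rho>) = c \<rho> * nb \<rho> \<rho> + (\<Sum>r\<in>{..<N} - {\<rho>}. c r * nb r \<rho>)"
    using less.prems by (intro sum.remove) auto
  then have "(\<Sum>r<N. c r * nb r \<rho>) = c \<rho> * nb \<rho> \<rho>" using z by simp
  then show ?case using sums[OF less.prems] diag[OF less.prems] by simp
qed




lemma prod_list_map_remove1:
  fixes f :: "'b \<Rightarrow> 'c::comm_monoid_mult"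
  shows "x \<in> set xs \<Longrightarrow> prod_list (map f xs) = f x * prod_list (map f (remove1 x xs))"
  by (induction xs) (auto simp: mult.left_commute)

lemma evl_prod_list: "evl v (prod_list (map f xs)) = prod_list (map (\<lambda>x. evl v (f x)) xs)"
  by (induction xs) (auto simp: evl_mult)

lemma Rring_power: "p \<in> Rring \<Longrightarrow> p ^ n \<in> Rring"
  using Rring_mult by (induction n) (auto simp: Rdeg_Rring[THEN subsetD, OF Rdeg_one])

lemma bf_Rring: "bf u d g \<Longrightarrow> u < 5 \<Longrightarrow> g \<in> Rring"
proof (induction rule: bf.induct)
  case (bfmono p q d) then show ?case by (intro Rring_mult Rring_power Rring_mvar) auto
qed (auto intro: Rring_add Rring_mult Rring_mconst)

lemma bf_eL: "finite S \<Longrightarrow> A \<in> S \<Longrightarrow> bf u (card S - 1) (eL u S A)"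
proof -
  assume "finite S" "A \<in> S"
  moreover have "bf u (card (S - {A})) (prod (ptform u) (S - {A}))"
    apply (rule bf_prod)
    using \<open>finite S\<close> apply simp
    by (rule bf_ptform)
  ultimately show ?thesis unfolding eL_def by simp
qed

lemma eL_zero: "u < 5 \<Longrightarrow> finite S \<Longrightarrow> A' \<in> S \<Longrightarrow> A' \<noteq> A \<Longrightarrow> evl (pvec u A') (eL u S A :: 'a::field mpoly) = 0"
  unfolding eL_def evl_prod using evl_pvec_ptform_eq by (subst prod_zero_iff) auto

lemma eL_nonzero: "u < 5 \<Longrightarrow> finite S \<Longrightarrow> S \<subseteq> P1 \<Longrightarrow> A \<in> S \<Longrightarrow> evl (pvec u A) (eL u S A :: 'a::field mpoly) \<noteq> 0"
  unfolding eL_def evl_prod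
  by (subst prod_zero_iff) (auto dest: evl_pvec_ptform_ne[of u A, rotated 2])

lemma eL_factor: "finite S \<Longrightarrow> A' \<in> S \<Longrightarrow> A' \<noteq> A \<Longrightarrow> eL u S A = ptform u A' * prod (ptform u) (S - {A} - {A'})"
  unfolding eL_def by (subst prod.remove[of _ A']) auto

lemma bf_NB: "r \<le> d \<Longrightarrow> r \<le> length cs \<Longrightarrow> bf u d (NB u cs d r)"
  unfolding NB_def using bf_mult[OF bf_prod_list[of "take r cs" u "ptform u", OF bf_ptform] bf_power[OF bf_uf, of u "d - r"]]
  by simp

lemma NB_zero: "u < 5 \<Longrightarrow> \<rho> < r \<Longrightarrow> r \<le> length cs \<Longrightarrow> evl (pvec u (cs ! \<rho>)) (NB u cs d r :: 'a::field mpoly) = 0"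
proof -
  assume a: "u < 5" "\<rho> < r" "r \<le> length cs"
  have "cs ! \<rho> \<in> set (take r cs)" using a by (auto simp: in_set_conv_nth intro!: exI[of _ \<rho>])
  then have "0 \<in> set (map (\<lambda>x. evl (pvec u (cs ! \<rho>)) (ptform u x :: 'a mpoly)) (take r cs))"
    using a(1) evl_pvec_ptform_eq[of u "cs ! \<rho>"] by force
  then show ?thesis unfolding NB_def evl_mult evl_prod_list
    by (simp add: prod_list_zero_iff)
qed

lemma NB_nonzero:
  assumes "u < 5" "\<rho> < length cs" "distinct cs" "set cs \<subseteq> P1"
  shows "evl (pvec u (cs ! \<rho>)) (NB u cs d \<rho> :: 'a::field mpoly) \<noteq> 0"
proof -
  have C: "cs ! \<rho> \<in> P1" using assms by auto
  have "cs ! \<rho> \<notin> set (take \<rho> cs)"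
    using assms(2,3) by (auto simp: in_set_conv_nth nth_eq_iff_index_eq)
  moreover have "set (take \<rho> cs) \<subseteq> P1" using assms(4) by (meson order_trans set_take_subset)
  ultimately have "\<forall>x\<in>set (take \<rho> cs). evl (pvec u (cs ! \<rho>)) (ptform u x :: 'a mpoly) \<noteq> 0"
    using assms(1) C evl_pvec_ptform_ne by (metis subsetD)
  then have "prod_list (map (\<lambda>x. evl (pvec u (cs ! \<rho>)) (ptform u x :: 'a mpoly)) (take \<rho> cs)) \<noteq> 0"
    by (auto simp: prod_list_zero_iff)
  moreover have "evl (pvec u (cs ! \<rho>)) (uf u (cs ! \<rho>) :: 'a mpoly) \<noteq> 0" using evl_uf assms(1) C by blast
  ultimately show ?thesis unfolding NB_def evl_mult evl_prod_list evl_power by simp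
qed




definition mon :: "nat \<Rightarrow> nat \<Rightarrow> nat \<Rightarrow> nat \<Rightarrow> nat \<Rightarrow> nat \<Rightarrow> 'a::comm_ring_1 mpoly" where
  "mon i j k a b c = (mvar 0 ^ a * mvar 1 ^ (i - a)) * (mvar 2 ^ b * mvar 3 ^ (j - b)) * (mvar 4 ^ c * mvar 5 ^ (k - c))"

lemma Rdeg_in_subspace:
  fixes p :: "'a::field mpoly"
  assumes p: "p \<in> Rdeg i j k" and SP: "MV.subspace SP"
    and mons: "\<And>a b c. a \<le> i \<Longrightarrow> b \<le> j \<Longrightarrow> c \<le> k \<Longrightarrow> mon i j k a b c \<in> SP"
  shows "p \<in> SP"
proof -
  have "(\<Sum>m\<in>Poly_Mapping.keys p. mconst (Poly_Mapping.lookup p m) *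
    ((mvar 0 ^ Poly_Mapping.lookup m 0 * mvar 1 ^ Poly_Mapping.lookup m 1) *
     (mvar 2 ^ Poly_Mapping.lookup m 2 * mvar 3 ^ Poly_Mapping.lookup m 3) *
     (mvar 4 ^ Poly_Mapping.lookup m 4 * mvar 5 ^ Poly_Mapping.lookup m 5))) \<in> SP"
  proof (rule MV.subspace_sum[OF SP])
    fix m assume m: "m \<in> Poly_Mapping.keys p"
    have l: "Poly_Mapping.lookup m 0 + Poly_Mapping.lookup m 1 = i"
        "Poly_Mapping.lookup m 2 + Poly_Mapping.lookup m 3 = j" "Poly_Mapping.lookup m 4 + Poly_Mapping.lookup m 5 = k"
      using poly_decomp_Rdeg(2)[OF p m] by auto
    have "(mvar 0 ^ Poly_Mapping.lookup m 0 * mvar 1 ^ Poly_Mapping.lookup m 1) *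
     (mvar 2 ^ Poly_Mapping.lookup m 2 * mvar 3 ^ Poly_Mapping.lookup m 3) *
     (mvar 4 ^ Poly_Mapping.lookup m 4 * mvar 5 ^ Poly_Mapping.lookup m 5) =
      (mon i j k (Poly_Mapping.lookup m 0) (Poly_Mapping.lookup m 2) (Poly_Mapping.lookup m 4) :: 'a mpoly)"
      unfolding mon_def using l by (metis add_diff_cancel_left')
    moreover have "mon i j k (Poly_Mapping.lookup m 0) (Poly_Mapping.lookup m 2) (Poly_Mapping.lookup m 4) \<in> SP"
      using l by (intro mons) auto
    ultimately show "mconst (Poly_Mapping.lookup p m) *
    ((mvar 0 ^ Poly_Mapping.lookup m 0 * mvar 1 ^ Poly_Mapping.lookup m 1) *
     (mvar 2 ^ Poly_Mapping.lookup m 2 * mvar 3 ^ Poly_Mapping.lookup m 3) *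
     (mvar 4 ^ Poly_Mapping.lookup m 4 * mvar 5 ^ Poly_Mapping.lookup m 5)) \<in> SP"
      using MV.subspace_scale[OF SP] unfolding mscale_eq by metis
  qed
  then show ?thesis using poly_decomp_Rdeg(1)[OF p] by simp
qed

lemma mon_bf:
  assumes "a \<le> i" "b \<le> j" "c \<le> k"
  shows "bf 0 i (mvar 0 ^ a * mvar 1 ^ (i - a))" "bf 2 j (mvar 2 ^ b * mvar 3 ^ (j - b))"
    "bf 4 k (mvar 4 ^ c * mvar 5 ^ (k - c))"
  using bfmono[of a "i - a" i 0] bfmono[of b "j - b" j 2] bfmono[of c "k - c" k 4] assms
  by (simp_all add: numeral_eq_Suc)

lemma span_mult_closed:
  assumes SP: "MV.subspace SP" and x: "x \<in> MV.span E" and E: "\<And>e. e \<in> E \<Longrightarrow> e * q \<in> SP"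
  shows "x * q \<in> SP"
  using x
proof (induction rule: MV.span_induct_alt)
  case base then show ?case using MV.subspace_0[OF SP] by simp
next
  case (step c x y)
  have "mscale c x * q + y * q = mscale c (x * q) + y * q" by (simp add: mscale_eq algebra_simps)
  moreover have "mscale c (x * q) \<in> SP" using E step MV.subspace_scale[OF SP] by blast
  ultimately show ?case using step MV.subspace_add[OF SP] by (simp add: distrib_right)
qed

lemma Rring_prod: "(\<And>a. a \<in> A \<Longrightarrow> f a \<in> Rring) \<Longrightarrow> prod f A \<in> Rring"
  by (induction A rule: infinite_finite_induct) (auto intro: Rring_mult simp: Rdeg_Rring[THEN subsetD, OF Rdeg_one])

lemma Rdeg_fin: "(Rdeg i j k :: 'a::field mpoly set) \<subseteq> MV.span ((\<lambda>(a, b, c). mon i j k a b c) ` ({..i} \<times> {..j} \<times> {..k}))"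
proof
  fix p :: "'a mpoly" assume p: "p \<in> Rdeg i j k"
  have "\<And>a b c. a \<le> i \<Longrightarrow> b \<le> j \<Longrightarrow> c \<le> k \<Longrightarrow>
     (mon i j k a b c :: 'a mpoly) \<in> MV.span ((\<lambda>(a, b, c). mon i j k a b c) ` ({..i} \<times> {..j} \<times> {..k}))"
    by (rule MV.span_base, rule image_eqI[of _ _ "(a, b, c)" for a b c]) auto
  then show "p \<in> MV.span ((\<lambda>(a, b, c). mon i j k a b c) ` ({..i} \<times> {..j} \<times> {..k}))"
    by (rule Rdeg_in_subspace[OF p MV.subspace_span])
qed

locale ptset =
  fixes X :: "'a::field pt3 set" and k :: nat
  assumes fin: "finite X" and pts: "X \<subseteq> P1cube" and ne: "X \<noteq> {}"
begin

definition "S = fst ` X"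
definition "T = (fst \<circ> snd) ` X"
definition "Q = (\<lambda>P. (fst P, fst (snd P))) ` X"
definition "Z A B = {C. (A, B, C) \<in> X}"
definition "zl A B = (SOME xs. distinct xs \<and> set xs = Z A B)"
definition "nn A B = card (Z A B)"
definition "ii = card S - 1"
definition "jj = card T - 1"
definition "J = Sigma Q (\<lambda>(A, B). {..< min (nn A B) (Suc k)})"
definition "bb x = (case x of ((A, B), r) \<Rightarrow> eL 0 S A * eL 2 T B * NB 4 (zl A B) k r)"
definition "V = (Rdeg ii jj k :: 'a mpoly set)"
definition "W = IX X \<inter> V"
definition "pv P = (\<lambda>i. if i < 2 then pvec 0 (fst P) i else if i < 4 then pvec 2 (fst (snd P)) i
   else pvec 4 (snd (snd P)) i)"

lemma finS: "finite S" and finT: "finite T" and finQ: "finite Q"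
  unfolding S_def T_def Q_def using fin by auto

lemma X_P1: "P \<in> X \<Longrightarrow> fst P \<in> P1 \<and> fst (snd P) \<in> P1 \<and> snd (snd P) \<in> P1"
  using pts unfolding P1cube_def by auto

lemma SP1: "S \<subseteq> P1" and TP1: "T \<subseteq> P1"
  unfolding S_def T_def using X_P1 by auto

lemma Z_sub: "Z A B \<subseteq> snd ` snd ` X"
  unfolding Z_def by force

lemma finZ: "finite (Z A B)"
  using Z_sub fin by (meson finite_imageI finite_subset)

lemma ZP1: "(A, B) \<in> Q \<Longrightarrow> Z A B \<subseteq> P1"
  unfolding Z_def using X_P1 by fastforce

lemma cardS: "card S = Suc ii" and cardT: "card T = Suc jj"
  unfolding ii_def jj_def S_def T_def using ne fin by (auto simp: card_gt_0_iff)

lemma zl: "distinct (zl A B)" "set (zl A B) = Z A B" "length (zl A B) = nn A B"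
proof -
  have "\<exists>xs. distinct xs \<and> set xs = Z A B" using finite_distinct_list[OF finZ] by blast
  then have "distinct (zl A B) \<and> set (zl A B) = Z A B" unfolding zl_def by (rule someI_ex)
  then show "distinct (zl A B)" "set (zl A B) = Z A B" "length (zl A B) = nn A B"
    unfolding nn_def using distinct_card by metis+
qed

lemma finJ: "finite J"
  unfolding J_def using finQ by auto

lemma QST: "(A, B) \<in> Q \<Longrightarrow> A \<in> S \<and> B \<in> T"
  unfolding Q_def S_def T_def by auto

lemma evl_pv0: "bf 0 d g \<Longrightarrow> evl (pv P) g = evl (pvec 0 (fst P)) g"
  by (rule bf_evl_cong) (auto simp: pv_def pvec_def)
lemma evl_pv2: "bf 2 d g \<Longrightarrow> evl (pv P) g = evl (pvec 2 (fst (snd P))) g"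
  by (rule bf_evl_cong) (auto simp: pv_def pvec_def)
lemma evl_pv4: "bf 4 d g \<Longrightarrow> evl (pv P) g = evl (pvec 4 (snd (snd P))) g"
  by (rule bf_evl_cong) (auto simp: pv_def pvec_def)

lemma evl_Ipt: "p \<in> Ipt P \<Longrightarrow> evl (pv P) p = 0"
proof -
  assume "p \<in> Ipt P"
  then obtain f g h where p: "p = f * ptform 0 (fst P) + g * ptform 2 (fst (snd P)) + h * ptform 4 (snd (snd P))"
    unfolding Ipt_def by blast
  have "evl (pv P) (ptform 0 (fst P)) = 0" using evl_pv0[OF bf_ptform[of 0 "fst P"], of P] evl_pvec_ptform_eq[of 0 "fst P"] by simp
  moreover have "evl (pv P) (ptform 2 (fst (snd P))) = 0" using evl_pv2[OF bf_ptform[of 2 "fst (snd P)"], of P] evl_pvec_ptform_eq[of 2 "fst (snd P)"] by simp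
  moreover have "evl (pv P) (ptform 4 (snd (snd P))) = 0" using evl_pv4[OF bf_ptform[of 4 "snd (snd P)"], of P] evl_pvec_ptform_eq[of 4 "snd (snd P)"] by simp
  ultimately show ?thesis unfolding p by (simp add: evl_add evl_mult)
qed

lemma bf_eLS: "A \<in> S \<Longrightarrow> bf 0 ii (eL 0 S A)"
  using bf_eL[OF finS] cardS by fastforce
lemma bf_eLT: "B \<in> T \<Longrightarrow> bf 2 jj (eL 2 T B)"
  using bf_eL[OF finT] cardT by fastforce

lemma V_mult: "bf 0 ii x \<Longrightarrow> bf 2 jj y \<Longrightarrow> bf 4 k z \<Longrightarrow> x * y * z \<in> V"
  unfolding V_def using Rdeg_mult[OF Rdeg_mult[OF bf_Rdeg0 bf_Rdeg2] bf_Rdeg4] by simp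

lemma bb_V: "x \<in> J \<Longrightarrow> bb x \<in> V"
proof -
  assume "x \<in> J"
  then obtain A B r where x: "x = ((A, B), r)" "(A, B) \<in> Q" "r < min (nn A B) (Suc k)"
    unfolding J_def by auto
  have "bf 4 k (NB 4 (zl A B) k r)" using x zl(3) by (intro bf_NB) auto
  then show ?thesis unfolding x bb_def using QST[OF x(2)] by (auto intro!: V_mult bf_eLS bf_eLT)
qed

lemma eL_Rring: "eL u U A \<in> Rring" if "u < 5" for U A
  unfolding eL_def using Rring_ptform that by (intro Rring_prod) auto

lemma Ipt_offpair:
  assumes P: "P \<in> X" and AB: "A \<in> S" "B \<in> T" and ne: "(fst P, fst (snd P)) \<noteq> (A, B)" and r: "r \<in> Rring"
  shows "eL 0 S A * eL 2 T B * r \<in> Ipt P"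
proof (cases "fst P = A")
  case False
  have "fst P \<in> S" using P unfolding S_def by auto
  then have e: "eL 0 S A = ptform 0 (fst P) * prod (ptform 0) (S - {A} - {fst P})"
    using eL_factor[OF finS] False by blast
  have "prod (ptform 0) (S - {A} - {fst P}) \<in> Rring" by (rule Rring_prod) (simp add: Rring_ptform)
  then have "(prod (ptform 0) (S - {A} - {fst P}) * eL 2 T B * r) * ptform 0 (fst P) \<in> Ipt P"
    using r eL_Rring[of 2] by (intro Ipt_gen0 Rring_mult) auto
  then show ?thesis unfolding e by (simp add: algebra_simps)
next
  case True
  then have nB: "fst (snd P) \<noteq> B" using ne by auto
  have "fst (snd P) \<in> T" using P unfolding T_def by auto
  then have e: "eL 2 T B = ptform 2 (fst (snd P)) * prod (ptform 2) (T - {B} - {fst (snd P)})"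
    using eL_factor[OF finT] nB by blast
  have "prod (ptform 2) (T - {B} - {fst (snd P)}) \<in> Rring" by (rule Rring_prod) (simp add: Rring_ptform)
  then have "(prod (ptform 2) (T - {B} - {fst (snd P)}) * eL 0 S A * r) * ptform 2 (fst (snd P)) \<in> Ipt P"
    using r eL_Rring[of 0] by (intro Ipt_gen2 Rring_mult) auto
  then show ?thesis unfolding e by (simp add: algebra_simps)
qed

lemma W_sub: "MV.subspace W"
  unfolding W_def V_def by (rule IX_subspace)

lemma W_mem: "p \<in> V \<Longrightarrow> (\<And>P. P \<in> X \<Longrightarrow> p \<in> Ipt P) \<Longrightarrow> p \<in> W"
  unfolding W_def IX_def V_def using Rdeg_Rring by blast

lemma base_span:
  assumes A: "A \<in> S" and B: "B \<in> T" and z: "bf 4 k zz"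
  shows "eL 0 S A * eL 2 T B * zz \<in> MV.span (bb ` J \<union> W)"
proof (cases "(A, B) \<in> Q")
  case False
  have "eL 0 S A * eL 2 T B * zz \<in> W"
  proof (rule W_mem)
    show "eL 0 S A * eL 2 T B * zz \<in> V" using A B z by (intro V_mult bf_eLS bf_eLT)
    fix P assume P: "P \<in> X"
    then have "(fst P, fst (snd P)) \<noteq> (A, B)" using False unfolding Q_def by force
    then show "eL 0 S A * eL 2 T B * zz \<in> Ipt P"
      using Ipt_offpair[OF P A B] bf_Rring[OF z] by simp
  qed
  then show ?thesis by (auto intro: MV.span_base)
next
  case True
  let ?cs = "zl A B"
  let ?q = "eL 0 S A * eL 2 T B"
  have csP: "set ?cs \<subseteq> P1" using ZP1[OF True] zl(2) by simp
  obtain y h where yh: "y \<in> MV.span (NB 4 ?cs k ` {..< min (length ?cs) (Suc k)})"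
    "bf 4 (k - length ?cs) h" "k < length ?cs \<longrightarrow> h = 0" "zz = y + prod_list (map (ptform 4) ?cs) * h"
    using newton[of 4 ?cs k zz] csP z by auto
  have "?q * y \<in> MV.span ((\<lambda>b. ?q * b) ` NB 4 ?cs k ` {..< min (length ?cs) (Suc k)})"
    using yh(1) by (rule span_mult)
  moreover have "(\<lambda>b. ?q * b) ` NB 4 ?cs k ` {..< min (length ?cs) (Suc k)} \<subseteq> bb ` J"
  proof
    fix x assume "x \<in> (\<lambda>b. ?q * b) ` NB 4 ?cs k ` {..< min (length ?cs) (Suc k)}"
    then obtain r where r: "r < min (length ?cs) (Suc k)" "x = ?q * NB 4 ?cs k r" by auto
    then have "((A, B), r) \<in> J" unfolding J_def using True zl(3) by auto
    moreover have "x = bb ((A, B), r)" unfolding bb_def r(2) by simp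
    ultimately show "x \<in> bb ` J" by blast
  qed
  ultimately have 1: "?q * y \<in> MV.span (bb ` J \<union> W)"
    using MV.span_mono[of "bb ` J" "bb ` J \<union> W"] MV.span_mono by blast
  have 2: "?q * (prod_list (map (ptform 4) ?cs) * h) \<in> MV.span (bb ` J \<union> W)"
  proof (cases "k < length ?cs")
    case True then show ?thesis using yh(3) by (simp add: MV.span_zero)
  next
    case False
    have bfp: "bf 4 k (prod_list (map (ptform 4) ?cs) * h)"
      using bf_mult[OF bf_prod_list[of ?cs 4 "ptform 4", OF bf_ptform] yh(2)] False by simp
    have "?q * (prod_list (map (ptform 4) ?cs) * h) \<in> W"
    proof (rule W_mem)
      show "?q * (prod_list (map (ptform 4) ?cs) * h) \<in> V"
        by (rule V_mult[OF bf_eLS[OF A] bf_eLT[OF B] bfp])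
      fix P assume P: "P \<in> X"
      show "?q * (prod_list (map (ptform 4) ?cs) * h) \<in> Ipt P"
      proof (cases "(fst P, fst (snd P)) = (A, B)")
        case False
        then show ?thesis using Ipt_offpair[OF P A B False bf_Rring[OF bfp]] by (simp add: mult.assoc)
      next
        case True
        then have "snd (snd P) \<in> set ?cs" using P zl(2) unfolding Z_def by (cases P) auto
        then have pl: "prod_list (map (ptform 4) ?cs) = ptform 4 (snd (snd P)) * prod_list (map (ptform 4) (remove1 (snd (snd P)) ?cs))"
          by (rule prod_list_map_remove1)
        have "(?q * prod_list (map (ptform 4) (remove1 (snd (snd P)) ?cs)) * h) * ptform 4 (snd (snd P)) \<in> Ipt P"
        proof (rule Ipt_gen4)
          have "prod_list (map (ptform 4) (remove1 (snd (snd P)) ?cs)) \<in> Rring"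
            by (rule bf_Rring[OF bf_prod_list]) (auto intro: bf_ptform[of 4, simplified])
          then show "?q * prod_list (map (ptform 4) (remove1 (snd (snd P)) ?cs)) * h \<in> Rring"
            using eL_Rring[of 0] eL_Rring[of 2] bf_Rring[OF yh(2)] by (intro Rring_mult) auto
        qed
        then show ?thesis unfolding pl by (simp add: algebra_simps)
      qed
    qed
    then show ?thesis by (auto intro: MV.span_base)
  qed
  have "eL 0 S A * eL 2 T B * zz = ?q * y + ?q * (prod_list (map (ptform 4) ?cs) * h)"
    unfolding yh(4) by (simp add: algebra_simps)
  then show ?thesis using MV.span_add[OF 1 2] by simp
qed

lemma V_span: "V \<subseteq> MV.span (bb ` J \<union> W)"
proof
  fix p :: "'a mpoly" assume "p \<in> V"
  then have p: "p \<in> Rdeg ii jj k" unfolding V_def .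
  show "p \<in> MV.span (bb ` J \<union> W)"
  proof (rule Rdeg_in_subspace[OF p MV.subspace_span])
    fix a b c assume abc: "a \<le> ii" "b \<le> jj" "c \<le> k"
    note m = mon_bf[OF abc]
    let ?x = "mvar 0 ^ a * mvar 1 ^ (ii - a)" and ?y = "mvar 2 ^ b * mvar 3 ^ (jj - b)"
      and ?z = "mvar 4 ^ c * mvar 5 ^ (k - c)"
    have "?x \<in> MV.span (eL 0 S ` S)" using lagrange[of 0 S ii] finS SP1 cardS m(1) by auto
    moreover have "\<And>e. e \<in> eL 0 S ` S \<Longrightarrow> e * (?y * ?z) \<in> MV.span (bb ` J \<union> W)"
    proof -
      fix e assume "e \<in> eL 0 S ` S"
      then obtain A where A: "A \<in> S" "e = eL 0 S A" by auto
      have "?y \<in> MV.span (eL 2 T ` T)" using lagrange[of 2 T jj] finT TP1 cardT m(2) by auto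
      moreover have "\<And>f. f \<in> eL 2 T ` T \<Longrightarrow> f * (e * ?z) \<in> MV.span (bb ` J \<union> W)"
      proof -
        fix f assume "f \<in> eL 2 T ` T"
        then obtain B where B: "B \<in> T" "f = eL 2 T B" by auto
        show "f * (e * ?z) \<in> MV.span (bb ` J \<union> W)"
          using base_span[OF A(1) B(1) m(3)] unfolding A(2) B(2) by (simp add: algebra_simps)
      qed
      ultimately have "?y * (e * ?z) \<in> MV.span (bb ` J \<union> W)"
        by (rule span_mult_closed[OF MV.subspace_span])
      then show "e * (?y * ?z) \<in> MV.span (bb ` J \<union> W)" by (simp add: algebra_simps)
    qed
    ultimately have "?x * (?y * ?z) \<in> MV.span (bb ` J \<union> W)"
      by (rule span_mult_closed[OF MV.subspace_span])
    then show "mon ii jj k a b c \<in> MV.span (bb ` J \<union> W)" unfolding mon_def by (simp add: algebra_simps)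
  qed
qed

lemma V_fin: "V \<subseteq> MV.span ((\<lambda>(a, b, c). mon ii jj k a b c) ` ({..ii} \<times> {..jj} \<times> {..k}))"
  unfolding V_def by (rule Rdeg_fin)

end




lemma evl_mscale: "evl v (mscale c p) = c * evl v p"
  by (simp add: mscale_eq evl_mult)

context ptset begin

lemma evl_bb:
  assumes x: "x \<in> J" and P: "P = (A0, B0, C0)" and A0: "A0 \<in> S" and B0: "B0 \<in> T"
  shows "evl (pv P) (bb x) = (if fst x = (A0, B0) then
     evl (pvec 0 A0) (eL 0 S A0) * evl (pvec 2 B0) (eL 2 T B0) * evl (pvec 4 C0) (NB 4 (zl A0 B0) k (snd x)) else 0)"
proof -
  obtain A B r where xe: "x = ((A, B), r)" "(A, B) \<in> Q" "r < min (nn A B) (Suc k)"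
    using x unfolding J_def by auto
  have AB: "A \<in> S" "B \<in> T" using QST[OF xe(2)] by auto
  have bNB: "bf 4 k (NB 4 (zl A B) k r)" using xe zl(3) by (intro bf_NB) auto
  have e: "evl (pv P) (bb x) = evl (pvec 0 A0) (eL 0 S A) * evl (pvec 2 B0) (eL 2 T B) * evl (pvec 4 C0) (NB 4 (zl A B) k r)"
    unfolding xe(1) bb_def using evl_pv0[OF bf_eLS[OF AB(1)]] evl_pv2[OF bf_eLT[OF AB(2)]] evl_pv4[OF bNB] P
    by (simp add: evl_mult)
  show ?thesis
  proof (cases "A = A0")
    case False
    then have "evl (pvec 0 A0) (eL 0 S A) = 0" using eL_zero[OF _ finS A0] by auto
    then show ?thesis using e False xe(1) by simp
  next
    case True
    show ?thesis
    proof (cases "B = B0")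
      case False
      then have "evl (pvec 2 B0) (eL 2 T B) = 0" using eL_zero[OF _ finT B0] by auto
      then show ?thesis using e False xe(1) by simp
    next
      case True
      then show ?thesis using e \<open>A = A0\<close> xe(1) by simp
    qed
  qed
qed

lemma bb_indep:
  assumes w: "(\<Sum>x\<in>J. mscale (c x) (bb x)) \<in> W"
  shows "\<forall>x\<in>J. c x = 0"
proof
  fix x assume "x \<in> J"
  then obtain A0 B0 \<rho> where xe: "x = ((A0, B0), \<rho>)" "(A0, B0) \<in> Q" "\<rho> < min (nn A0 B0) (Suc k)"
    unfolding J_def by auto
  have A0: "A0 \<in> S" and B0: "B0 \<in> T" using QST[OF xe(2)] by auto
  define N where "N = min (nn A0 B0) (Suc k)"
  define cs where "cs = zl A0 B0"
  define E0 where "E0 = evl (pvec 0 A0) (eL 0 S A0) * evl (pvec 2 B0) (eL 2 T B0)"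
  have E0: "E0 \<noteq> 0" unfolding E0_def using eL_nonzero[OF _ finS SP1 A0, of 0] eL_nonzero[OF _ finT TP1 B0, of 2] by simp
  define nb where "nb r \<rho>' = E0 * evl (pvec 4 (cs ! \<rho>')) (NB 4 cs k r)" for r \<rho>'
  define c' where "c' r = c ((A0, B0), r)" for r
  have lcs: "length cs = nn A0 B0" unfolding cs_def by (rule zl(3))
  have csP: "set cs \<subseteq> P1" unfolding cs_def using ZP1[OF xe(2)] zl(2) by simp
  have Jsub: "J \<inter> {x. fst x = (A0, B0)} = (\<lambda>r. ((A0, B0), r)) ` {..<N}"
    unfolding J_def N_def using xe(2) by auto
  have "c' \<rho> = 0"
  proof (rule triangular[of N c' nb])
    fix \<rho>' assume \<rho>': "\<rho>' < N"
    define P where "P = (A0, B0, cs ! \<rho>')"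
    have "cs ! \<rho>' \<in> Z A0 B0" using \<rho>' lcs zl(2) unfolding N_def cs_def by (metis min_less_iff_conj nth_mem)
    then have PX: "P \<in> X" unfolding P_def Z_def by simp
    have "evl (pv P) (\<Sum>x\<in>J. mscale (c x) (bb x)) = 0"
      using w PX evl_Ipt unfolding W_def IX_def by blast
    moreover have "evl (pv P) (\<Sum>x\<in>J. mscale (c x) (bb x)) = (\<Sum>x\<in>J. c x * evl (pv P) (bb x))"
      by (simp add: evl_sum evl_mscale)
    moreover have "\<dots> = (\<Sum>x\<in>J. if fst x = (A0, B0) then c x * nb (snd x) \<rho>' else 0)"
      by (rule sum.cong[OF refl]) (auto simp: evl_bb[OF _ P_def A0 B0] nb_def E0_def cs_def)
    moreover have "\<dots> = (\<Sum>x\<in>J \<inter> {x. fst x = (A0, B0)}. c x * nb (snd x) \<rho>')"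
      using finJ by (simp add: sum.inter_restrict)
    moreover have "\<dots> = (\<Sum>r<N. c' r * nb r \<rho>')"
      unfolding Jsub c'_def by (subst sum.reindex) (auto simp: inj_on_def)
    ultimately show "(\<Sum>r<N. c' r * nb r \<rho>') = 0" by simp
  next
    fix r \<rho>' assume "\<rho>' < r" "r < N"
    then show "nb r \<rho>' = 0" unfolding nb_def using NB_zero[of 4 \<rho>' r cs k] lcs N_def by simp
  next
    fix \<rho>' assume "\<rho>' < N"
    then show "nb \<rho>' \<rho>' \<noteq> 0" unfolding nb_def using NB_nonzero[of 4 \<rho>' cs k] E0 lcs N_def csP zl(1)
      unfolding cs_def by simp
  next
    show "\<rho> < N" using xe N_def by simp
  qed
  then show "c x = 0" unfolding c'_def xe(1) .
qed

lemma dimVW: "MV.dim V = card J + MV.dim W"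
proof (rule dim_count)
  show "finite J" by (rule finJ)
  show "MV.subspace W" by (rule W_sub)
  show "W \<subseteq> V" unfolding W_def by auto
  show "bb ` J \<subseteq> V" using bb_V by auto
  show "V \<subseteq> MV.span (bb ` J \<union> W)" by (rule V_span)
  show "V \<subseteq> MV.span ((\<lambda>(a, b, c). mon ii jj k a b c) ` ({..ii} \<times> {..jj} \<times> {..k}))" by (rule V_fin)
  show "finite ((\<lambda>(a, b, c). mon ii jj k a b c :: 'a mpoly) ` ({..ii} \<times> {..jj} \<times> {..k}))" by simp
  fix c assume "(\<Sum>x\<in>J. mscale (c x) (bb x)) \<in> W"
  then show "\<forall>x\<in>J. c x = 0" by (rule bb_indep)
qed

lemma HF_main: "HF X (card (fst ` X) - 1) (card ((fst \<circ> snd) ` X) - 1) k = (\<Sum>q\<in>Q. min (nn (fst q) (snd q)) (Suc k))"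
proof -
  have e: "card (fst ` X) - 1 = ii" "card ((fst \<circ> snd) ` X) - 1 = jj" unfolding ii_def jj_def S_def T_def by simp_all
  have "HF X ii jj k = MV.dim V - MV.dim W"
    unfolding HF_def kdim_eq V_def W_def by (rule refl)
  also have "\<dots> = card J" using dimVW by simp
  also have "\<dots> = (\<Sum>q\<in>Q. min (nn (fst q) (snd q)) (Suc k))"
    unfolding J_def using finQ by (subst card_SigmaI) (auto simp: split_beta)
  finally show ?thesis unfolding e .
qed

end




definition lineOf :: "('a::field \<times> 'a) set \<Rightarrow> ('a \<times> 'a) set \<Rightarrow> 'a pt3 set" where
  "lineOf A B = {P \<in> P1cube. fst P = A \<and> fst (snd P) = B}"

lemma pcls_P1: "v \<noteq> (0, 0) \<Longrightarrow> pcls v \<in> P1"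
  unfolding P1_def by blast

lemma lvan_iff:
  assumes l: "l \<noteq> (0, 0)" and A: "A \<in> P1"
  shows "lvan l A \<longleftrightarrow> A = pcls (snd l, - fst l)"
proof
  assume lv: "lvan l A"
  have B: "pcls (snd l, - fst l) \<in> P1" using l by (intro pcls_P1) (cases l, auto)
  obtain \<mu> where mu: "\<mu> \<noteq> 0" "rep (pcls (snd l, - fst l)) = (\<mu> * snd l, \<mu> * - fst l)"
    using P1_rep(1)[OF B] unfolding pcls_def by auto
  have "snd (rep (pcls (snd l, - fst l))) * fst (rep A) - fst (rep (pcls (snd l, - fst l))) * snd (rep A)
     = - \<mu> * (fst l * fst (rep A) + snd l * snd (rep A))"
    unfolding mu(2) by (simp add: algebra_simps)
  also have "\<dots> = 0" using lv unfolding lvan_def by simp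
  finally have "snd (rep (pcls (snd l, - fst l))) * fst (rep A) - fst (rep (pcls (snd l, - fst l))) * snd (rep A) = 0" .
  then show "A = pcls (snd l, - fst l)" using P1_cross[OF A B] by blast
next
  assume "A = pcls (snd l, - fst l)"
  then obtain \<mu> where "rep A = (\<mu> * snd l, \<mu> * - fst l)"
    using P1_rep(1)[OF A] unfolding pcls_def by auto
  then show "lvan l A" unfolding lvan_def by (simp add: algebra_simps)
qed

lemma line110_eq: "l \<noteq> (0, 0) \<Longrightarrow> m \<noteq> (0, 0) \<Longrightarrow> line110 l m = lineOf (pcls (snd l, - fst l)) (pcls (snd m, - fst m))"
proof -
  assume l: "l \<noteq> (0, 0)" and m: "m \<noteq> (0, 0)"
  have "\<And>P. P \<in> P1cube \<Longrightarrow> (lvan l (fst P) \<and> lvan m (fst (snd P))) =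
     (fst P = pcls (snd l, - fst l) \<and> fst (snd P) = pcls (snd m, - fst m))"
  proof -
    fix P :: "'a pt3" assume "P \<in> P1cube"
    then have "fst P \<in> P1" "fst (snd P) \<in> P1" unfolding P1cube_def by auto
    then show "(lvan l (fst P) \<and> lvan m (fst (snd P))) =
     (fst P = pcls (snd l, - fst l) \<and> fst (snd P) = pcls (snd m, - fst m))"
      using lvan_iff[OF l] lvan_iff[OF m] by simp
  qed
  then show ?thesis unfolding line110_def lineOf_def by blast
qed

lemma pcls_neg: "A \<in> P1 \<Longrightarrow> pcls (- fst (rep A), - snd (rep A)) = A"
proof -
  assume A: "A \<in> P1"
  have "(- fst (rep A), - snd (rep A)) \<in> pcls (rep A)" unfolding pcls_def
    by (intro CollectI exI[of _ "-1"]) simp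
  then show ?thesis using pcls_mem_eq P1_rep(3)[OF A] by metis
qed

lemma Lines110_eq: "Lines110 = (\<lambda>(A, B). lineOf A B) ` (P1 \<times> P1)"
proof
  show "Lines110 \<subseteq> (\<lambda>(A, B). lineOf A B) ` (P1 \<times> P1)"
  proof
    fix L assume "L \<in> Lines110"
    then obtain l m where lm: "L = line110 l m" "l \<noteq> (0, 0)" "m \<noteq> (0, 0)" unfolding Lines110_def by auto
    have "pcls (snd l, - fst l) \<in> P1" "pcls (snd m, - fst m) \<in> P1"
      using lm by (auto intro!: pcls_P1 simp: prod_eq_iff)
    then show "L \<in> (\<lambda>(A, B). lineOf A B) ` (P1 \<times> P1)" using line110_eq[OF lm(2,3)] lm(1) by force
  qed
  show "(\<lambda>(A, B). lineOf A B) ` (P1 \<times> P1) \<subseteq> Lines110"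
  proof
    fix L assume "L \<in> (\<lambda>(A, B). lineOf A B) ` (P1 \<times> P1)"
    then obtain A B where AB: "A \<in> P1" "B \<in> P1" "L = lineOf A B" by auto
    define l where "l = (snd (rep A), - fst (rep A))"
    define m where "m = (snd (rep B), - fst (rep B))"
    have l0: "l \<noteq> (0, 0)" "m \<noteq> (0, 0)" unfolding l_def m_def using P1_rep(2) AB by (auto simp: prod_eq_iff)
    have "line110 l m = lineOf A B" using line110_eq[OF l0] pcls_neg[OF AB(1)] pcls_neg[OF AB(2)] unfolding l_def m_def by simp
    then show "L \<in> Lines110" unfolding Lines110_def using l0 AB(3) by blast
  qed
qed

lemma P1_ne: "pcls (1, 0) \<in> (P1 :: ('a::field \<times> 'a) set set)"
  by (rule pcls_P1) simp

lemma lineOf_inj: "inj_on (\<lambda>(A, B). lineOf A B) ((P1 :: ('a::field \<times> 'a) set set) \<times> P1)"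
proof (rule inj_onI, clarsimp)
  fix A B A' B' :: "('a \<times> 'a) set"
  assume "A \<in> P1" "B \<in> P1" "A' \<in> P1" "B' \<in> P1" "lineOf A B = lineOf A' B'"
  moreover have "(A, B, pcls (1, 0)) \<in> lineOf A B" unfolding lineOf_def P1cube_def using P1_ne \<open>A \<in> P1\<close> \<open>B \<in> P1\<close> by auto
  ultimately show "A = A' \<and> B = B'" unfolding lineOf_def by auto
qed

lemma sum_min_count: "(\<Sum>m = 1..K. if m \<le> (a::nat) then 1 else 0) = min a K"
  by (induction K) (auto simp: sum.cl_ivl_Suc)

lemma card_filter_sum: "finite A \<Longrightarrow> card {x \<in> A. P x} = (\<Sum>x\<in>A. if P x then 1 else 0)"
  by (simp add: sum.If_cases Int_def)

context ptset begin

lemma X_line: "A \<in> P1 \<Longrightarrow> B \<in> P1 \<Longrightarrow> card (X \<inter> lineOf A B) = nn A B"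
proof -
  assume "A \<in> P1" "B \<in> P1"
  have "X \<inter> lineOf A B = (\<lambda>C. (A, B, C)) ` Z A B"
    unfolding lineOf_def Z_def using pts by force
  then show ?thesis unfolding nn_def by (simp add: card_image inj_on_def)
qed

lemma nn_le: "nn A B \<le> card X"
proof -
  have "(\<lambda>C. (A, B, C)) ` Z A B \<subseteq> X" unfolding Z_def by auto
  then have "card ((\<lambda>C. (A, B, C)) ` Z A B) \<le> card X" using fin by (rule card_mono[rotated])
  then show ?thesis unfolding nn_def by (simp add: card_image inj_on_def)
qed

lemma Q_P1: "Q \<subseteq> P1 \<times> P1"
  using QST SP1 TP1 by auto

lemma rnum_eq: "1 \<le> n \<Longrightarrow> rnum n X = card {q \<in> Q. nn (fst q) (snd q) = n}"
proof -
  assume n: "1 \<le> n"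
  have "{L \<in> Lines110. card (X \<inter> L) = n} = (\<lambda>(A, B). lineOf A B) ` {q \<in> Q. nn (fst q) (snd q) = n}"
  proof
    show "{L \<in> Lines110. card (X \<inter> L) = n} \<subseteq> (\<lambda>(A, B). lineOf A B) ` {q \<in> Q. nn (fst q) (snd q) = n}"
    proof
      fix L assume "L \<in> {L \<in> Lines110. card (X \<inter> L) = n}"
      then obtain A B where AB: "A \<in> P1" "B \<in> P1" "L = lineOf A B" "card (X \<inter> L) = n"
        unfolding Lines110_eq by auto
      then have nn: "nn A B = n" using X_line by simp
      then have "Z A B \<noteq> {}" using n unfolding nn_def by auto
      then have "(A, B) \<in> Q" unfolding Z_def Q_def by force
      then show "L \<in> (\<lambda>(A, B). lineOf A B) ` {q \<in> Q. nn (fst q) (snd q) = n}" using AB nn by force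
    qed
    show "(\<lambda>(A, B). lineOf A B) ` {q \<in> Q. nn (fst q) (snd q) = n} \<subseteq> {L \<in> Lines110. card (X \<inter> L) = n}"
      using Q_P1 X_line unfolding Lines110_eq by force
  qed
  moreover have "inj_on (\<lambda>(A, B). lineOf A B) {q \<in> Q. nn (fst q) (snd q) = n}"
    apply (rule inj_on_subset[OF lineOf_inj])
    using Q_P1 by auto
  ultimately show ?thesis unfolding rnum_def by (simp add: card_image)
qed

lemma RHS_eq: "(\<Sum>m = 1..k + 1. \<Sum>n | m \<le> n \<and> rnum n X \<noteq> 0. rnum n X) = (\<Sum>q\<in>Q. min (nn (fst q) (snd q)) (Suc k))"
proof -
  have step: "(\<Sum>n | m \<le> n \<and> rnum n X \<noteq> 0. rnum n X) = (\<Sum>q\<in>Q. if m \<le> nn (fst q) (snd q) then 1 else 0)"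
    if m: "1 \<le> m" for m
  proof -
    have "(\<Sum>n | m \<le> n \<and> rnum n X \<noteq> 0. rnum n X) = (\<Sum>n\<in>{m..card X}. rnum n X)"
    proof (rule sum.mono_neutral_left)
      show "{n. m \<le> n \<and> rnum n X \<noteq> 0} \<subseteq> {m..card X}"
      proof
        fix n assume "n \<in> {n. m \<le> n \<and> rnum n X \<noteq> 0}"
        then have n: "m \<le> n" "rnum n X \<noteq> 0" by auto
        have "rnum n X = card {q \<in> Q. nn (fst q) (snd q) = n}" using rnum_eq[of n] m n by simp
        then have "{q \<in> Q. nn (fst q) (snd q) = n} \<noteq> {}" using n(2) by (metis card.empty)
        then obtain q where "q \<in> Q" "nn (fst q) (snd q) = n" by blast
        then have "n \<le> card X" using nn_le by metis
        then show "n \<in> {m..card X}" using n by auto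
      qed
    qed auto
    also have "\<dots> = (\<Sum>n\<in>{m..card X}. \<Sum>q\<in>Q. if nn (fst q) (snd q) = n then 1 else 0)"
      using rnum_eq m finQ by (intro sum.cong refl) (auto simp: card_filter_sum)
    also have "\<dots> = (\<Sum>q\<in>Q. \<Sum>n\<in>{m..card X}. if nn (fst q) (snd q) = n then 1 else 0)"
      by (rule sum.swap)
    also have "\<dots> = (\<Sum>q\<in>Q. if m \<le> nn (fst q) (snd q) then 1 else 0)"
      using nn_le by (intro sum.cong refl) (simp add: sum.delta)
    finally show ?thesis .
  qed
  have "(\<Sum>m = 1..k + 1. \<Sum>n | m \<le> n \<and> rnum n X \<noteq> 0. rnum n X) =
      (\<Sum>m = 1..k + 1. \<Sum>q\<in>Q. if m \<le> nn (fst q) (snd q) then 1 else 0)"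
    using step by (intro sum.cong refl) auto
  also have "\<dots> = (\<Sum>q\<in>Q. \<Sum>m = 1..k + 1. if m \<le> nn (fst q) (snd q) then 1 else 0)"
    by (rule sum.swap)
  also have "\<dots> = (\<Sum>q\<in>Q. min (nn (fst q) (snd q)) (Suc k))"
  proof (rule sum.cong[OF refl])
    fix q :: "('a \<times> 'a) set \<times> ('a \<times> 'a) set"
    show "(\<Sum>m = 1..k + 1. if m \<le> nn (fst q) (snd q) then 1 else 0) = min (nn (fst q) (snd q)) (Suc k)"
      using sum_min_count[where K = "k + 1" and a = "nn (fst q) (snd q)"] by simp
  qed
  finally show ?thesis .
qed

end




theorem theorem3p4:
  fixes X :: "'a::field_char_0 pt3 set" and k :: nat
  assumes alg_closed: "\<forall>p :: 'a poly. degree p \<ge> 1 \<longrightarrow> (\<exists>x. poly p x = 0)"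
    and fin: "finite X"
    and pts: "X \<subseteq> P1cube"
  shows "HF X (card (fst ` X) - 1) (card ((fst \<circ> snd) ` X) - 1) k
       = (\<Sum>m = 1..k + 1. \<Sum>n | m \<le> n \<and> rnum n X \<noteq> 0. rnum n X)"
proof (cases "X = {}")
  case True
  have "IX X \<inter> Rdeg 0 0 k = Rdeg 0 0 k" unfolding IX_def True using Rdeg_Rring by auto
  then have l: "HF X (card (fst ` X) - 1) (card ((fst \<circ> snd) ` X) - 1) k = 0"
    unfolding HF_def True by simp
  have "\<And>m. 1 \<le> m \<Longrightarrow> {n. m \<le> n \<and> rnum n X \<noteq> 0} = {}"
    unfolding rnum_def True by auto
  then have "(\<Sum>m = 1..k + 1. \<Sum>n | m \<le> n \<and> rnum n X \<noteq> 0. rnum n X) = 0"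
    by (intro sum.neutral) auto
  then show ?thesis using l by simp
next
  case False
  interpret ptset X k using fin pts False by unfold_locales
  show ?thesis using HF_main RHS_eq by simp
qed



end
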